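(* Let $\Gamma$ be a topological group, $A$ a regular CW-complex, and $\mathcal I$ a cellular $(\Gamma,A)$-groupoid. Then for any topological group $G$: (a) the restriction maps $\mathrm{res}_0\colon\mathrm{Rep}^G_{\mathrm{cell}}(\mathcal I)\to\mathrm{Rep}^G_{\mathrm{cell}}(\mathcal I^{(0)})$ and $\mathrm{res}_0\colon\overline{\mathrm{Rep}}^{\,G}_{\mathrm{cell}}(\mathcal I)\to\overline{\mathrm{Rep}}^{\,G}_{\mathrm{cell}}(\mathcal I^{(0)})$ are injective; (b) the restriction maps $\mathrm{res}_1\colon\mathrm{Rep}^G_{\mathrm{cell}}(\mathcal I)\to\mathrm{Rep}^G_{\mathrm{cell}}(\mathcal I^{(1)})$ and $\mathrm{res}_1\colon\overline{\mathrm{Rep}}^{\,G}_{\mathrm{cell}}(\mathcal I)\to\overline{\mathrm{Rep}}^{\,G}_{\mathrm{cell}}(\mathcal I^{(1)})$ are bijective.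
   Context: A CW-complex $A$ is regular if each cell $e$ has a characteristic map $\sigma_e\colon\mathbb D^{d(e)}\to A$ which is an embedding sending $\mathbb S^{d(e)-1}$ onto a subcomplex. For $a\in A$, $e(a)$ is the cell whose open cell contains $a$; $f\le e$ means $f$ is a face of $e$. A $(\Gamma,A)$-groupoid is a subspace $\mathcal I\subset\Gamma\times A$ with $\mathcal I\cap(\Gamma\times\{a\})=\tilde{\mathcal I}_a\times\{a\}$, $\tilde{\mathcal I}_a$ a closed subgroup (identified with $\mathcal I_a$). It is cellular if $\mathcal I_a=\mathcal I_b$ whenever $e(a)=e(b)$ (write $\mathcal I(e)$) and it is locally maximal (for each $a$ and neighbourhood $B$ of $a$ there is an open $U$, $a\in U\subset B$, and a homotopy $\rho_t\colon U\to U$ with $\rho_0=\mathrm{id}$, $\rho_1\equiv a$, $\mathcal I_u\subset\mathcal I_{\rho_t(u)}$); then $\mathcal I(e)\subset\mathcal I(f)$ for $f\le e$. $\mathcal I^{(k)}$ denotes the restriction of $\mathcal I$ over the $k$-skeleton $A^{(k)}$ (a cellular groupoid over $A^{(k)}$). A cellular representation of $\mathcal I$ in $G$ is a continuous map $\beta\colon\mathcal I\to G$, restricting to homomorphisms on each $\mathcal I_a$, with $\beta_a=\beta_b$ whenever $e(a)=e(b)$; equivalently a family $\beta_e\in\mathrm{Hom}(\mathcal I(e),G)$ with $\beta_e=\beta_f|_{\mathcal I(e)}$ for $f\le e$. Two are conjugate if $\beta'=g^{-1}\beta g$ for a single $g\in G$. $\mathrm{Rep}^G_{\mathrm{cell}}(\mathcal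 I)$ is the set of conjugacy classes of cellular representations. With $\overline{\mathrm{Hom}}(K,G)$ the set of $G$-conjugacy classes of continuous homomorphisms $K\to G$, $\overline{\mathrm{Rep}}^{\,G}_{\mathrm{cell}}(\mathcal I)$ is the set of families $(b_e)_e$ with $b_e\in\overline{\mathrm{Hom}}(\mathcal I(e),G)$ and $b_e=b_f|_{\mathcal I(e)}$ whenever $f\le e$. The same definitions apply to $\mathcal I^{(k)}$ over $A^{(k)}$, and $\mathrm{res}_k$ denotes restriction to cells of $A^{(k)}$. *)

theory Defs
  imports "HOL-Analysis.Analysis" "HOL-Algebra.Group"
begin

definition topological_group :: "'g monoid \<Rightarrow> 'g topology \<Rightarrow> bool" where
  "topological_group \<Gamma> T \<longleftrightarrow>
     group \<Gamma> \<and> topspace T = carrier \<Gamma> \<and>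
     continuous_map (prod_topology T T) T (\<lambda>(x, y). x \<otimes>\<^bsub>\<Gamma>\<^esub> y) \<and>
     continuous_map T T (\<lambda>x. inv\<^bsub>\<Gamma>\<^esub> x)"

text \<open>The closed disc D^d and its boundary sphere S^(d-1), inside R^d realised as
  the functions nat => real vanishing from index d on (library Euclidean_space d).\<close>
definition disc_set :: "nat \<Rightarrow> (nat \<Rightarrow> real) set" where
  "disc_set d = {x \<in> topspace (Euclidean_space d). (\<Sum>i<d. (x i)\<^sup>2) \<le> 1}"

definition sphere_set :: "nat \<Rightarrow> (nat \<Rightarrow> real) set" where
  "sphere_set d = {x \<in> topspace (Euclidean_space d). (\<Sum>i<d. (x i)\<^sup>2) = 1}"

definition disc_top :: "nat \<Rightarrow> (nat \<Rightarrow> real) topology" where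
  "disc_top d = subtopology (Euclidean_space d) (disc_set d)"

text \<open>X is the space A, C the set of (open) cells, dm e = d(e), and \<sigma> e the
  characteristic map of the cell e.\<close>
definition regular_CW ::
  "'a topology \<Rightarrow> 'a set set \<Rightarrow> ('a set \<Rightarrow> nat) \<Rightarrow> ('a set \<Rightarrow> (nat \<Rightarrow> real) \<Rightarrow> 'a) \<Rightarrow> bool" where
  "regular_CW X C dm \<sigma> \<longleftrightarrow>
     Hausdorff_space X \<and>
     \<comment> \<open>the open cells partition the space\<close>
     (\<forall>e\<in>C. e \<noteq> {}) \<and> (\<forall>e\<in>C. \<forall>f\<in>C. e \<noteq> f \<longrightarrow> e \<inter> f = {}) \<and> \<Union>C = topspace X \<and>
     \<comment> \<open>characteristic maps are embeddings, mapping the open disc onto the cell\<close>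
     (\<forall>e\<in>C. embedding_map (disc_top (dm e)) X (\<sigma> e)) \<and>
     (\<forall>e\<in>C. \<sigma> e ` (disc_set (dm e) - sphere_set (dm e)) = e) \<and>
     \<comment> \<open>the boundary sphere is mapped onto a (finite) subcomplex of lower-dimensional cells\<close>
     (\<forall>e\<in>C. \<exists>F. F \<subseteq> C \<and> finite F \<and> (\<forall>f\<in>F. dm f < dm e) \<and>
                 \<sigma> e ` sphere_set (dm e) = \<Union>F) \<and>
     \<comment> \<open>weak topology\<close>
     (\<forall>S. S \<subseteq> topspace X \<longrightarrow>
          (closedin X S \<longleftrightarrow> (\<forall>e\<in>C. closedin X (S \<inter> \<sigma> e ` disc_set (dm e)))))"

definition is_face :: "'a topology \<Rightarrow> 'a set \<Rightarrow> 'a set \<Rightarrow> bool" where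
  "is_face X f e \<longleftrightarrow> f \<subseteq> X closure_of e"

definition skel_cells :: "'a set set \<Rightarrow> ('a set \<Rightarrow> nat) \<Rightarrow> nat \<Rightarrow> 'a set set" where
  "skel_cells C dm k = {e \<in> C. dm e \<le> k}"

definition fiber :: "('g \<times> 'a) set \<Rightarrow> 'a \<Rightarrow> 'g set" where
  "fiber I a = {\<gamma>. (\<gamma>, a) \<in> I}"

text \<open>The subgroup I(e) attached to a cell e (the common isotropy group of its points).\<close>
definition cell_grp :: "('g \<times> 'a) set \<Rightarrow> 'a set \<Rightarrow> 'g set" where
  "cell_grp I e = fiber I (SOME a. a \<in> e)"

definition groupoid ::
  "'g monoid \<Rightarrow> 'g topology \<Rightarrow> 'a topology \<Rightarrow> ('g \<times> 'a) set \<Rightarrow> bool" where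
  "groupoid \<Gamma> T X I \<longleftrightarrow>
     I \<subseteq> carrier \<Gamma> \<times> topspace X \<and>
     (\<forall>a\<in>topspace X. subgroup (fiber I a) \<Gamma> \<and> closedin T (fiber I a))"

definition locally_maximal :: "'a topology \<Rightarrow> ('g \<times> 'a) set \<Rightarrow> bool" where
  "locally_maximal X I \<longleftrightarrow>
     (\<forall>a\<in>topspace X. \<forall>B. (\<exists>V. openin X V \<and> a \<in> V \<and> V \<subseteq> B) \<longrightarrow>
        (\<exists>U \<rho>. openin X U \<and> a \<in> U \<and> U \<subseteq> B \<and>
           continuous_map (prod_topology (top_of_set {0..1::real}) (subtopology X U))
                          (subtopology X U) \<rho> \<and>
           (\<forall>u\<in>U. \<rho> (0, u) = u \<and> \<rho> (1, u) = a) \<and>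
           (\<forall>t\<in>{0..1}. \<forall>u\<in>U. fiber I u \<subseteq> fiber I (\<rho> (t, u)))))"

definition cellular_groupoid ::
  "'g monoid \<Rightarrow> 'g topology \<Rightarrow> 'a topology \<Rightarrow> 'a set set \<Rightarrow> ('g \<times> 'a) set \<Rightarrow> bool" where
  "cellular_groupoid \<Gamma> T X C I \<longleftrightarrow>
     groupoid \<Gamma> T X I \<and>
     (\<forall>e\<in>C. \<forall>a\<in>e. \<forall>b\<in>e. fiber I a = fiber I b) \<and>
     locally_maximal X I"

text \<open>Continuous homomorphisms K \<rightarrow> G, K a subgroup of \<Gamma> with the subspace topology
  (represented by functions; only values on K matter).\<close>
definition cont_hom ::
  "'g monoid \<Rightarrow> 'g topology \<Rightarrow> 'g set \<Rightarrow> 'h monoid \<Rightarrow> 'h topology \<Rightarrow> ('g \<Rightarrow> 'h) \<Rightarrow> bool" where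
  "cont_hom \<Gamma> T K G TG \<phi> \<longleftrightarrow>
     (\<forall>x\<in>K. \<phi> x \<in> carrier G) \<and>
     (\<forall>x\<in>K. \<forall>y\<in>K. \<phi> (x \<otimes>\<^bsub>\<Gamma>\<^esub> y) = \<phi> x \<otimes>\<^bsub>G\<^esub> \<phi> y) \<and>
     continuous_map (subtopology T K) TG \<phi>"

definition conj_on :: "'h monoid \<Rightarrow> 'g set \<Rightarrow> ('g \<Rightarrow> 'h) \<Rightarrow> ('g \<Rightarrow> 'h) \<Rightarrow> bool" where
  "conj_on G K \<phi> \<psi> \<longleftrightarrow>
     (\<exists>g\<in>carrier G. \<forall>x\<in>K. \<psi> x = inv\<^bsub>G\<^esub> g \<otimes>\<^bsub>G\<^esub> \<phi> x \<otimes>\<^bsub>G\<^esub> g)"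

text \<open>Cellular representations of I restricted to the cells in S (S = all cells, or the
  cells of a skeleton): families \<beta>_e \<in> Hom(I(e),G) with \<beta>_e = \<beta>_f|I(e) for f \<le> e.\<close>
definition cell_rep ::
  "'g monoid \<Rightarrow> 'g topology \<Rightarrow> 'h monoid \<Rightarrow> 'h topology \<Rightarrow> 'a topology \<Rightarrow> ('g \<times> 'a) set
    \<Rightarrow> 'a set set \<Rightarrow> ('a set \<Rightarrow> 'g \<Rightarrow> 'h) \<Rightarrow> bool" where
  "cell_rep \<Gamma> T G TG X I S \<beta> \<longleftrightarrow>
     (\<forall>e\<in>S. cont_hom \<Gamma> T (cell_grp I e) G TG (\<beta> e)) \<and>
     (\<forall>e\<in>S. \<forall>f\<in>S. is_face X f e \<longrightarrow> (\<forall>x\<in>cell_grp I e. \<beta> e x = \<beta> f x))"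

definition rep_rel ::
  "'g monoid \<Rightarrow> 'g topology \<Rightarrow> 'h monoid \<Rightarrow> 'h topology \<Rightarrow> 'a topology \<Rightarrow> ('g \<times> 'a) set
    \<Rightarrow> 'a set set \<Rightarrow> (('a set \<Rightarrow> 'g \<Rightarrow> 'h) \<times> ('a set \<Rightarrow> 'g \<Rightarrow> 'h)) set" where
  "rep_rel \<Gamma> T G TG X I S =
     {(\<beta>, \<beta>'). cell_rep \<Gamma> T G TG X I S \<beta> \<and> cell_rep \<Gamma> T G TG X I S \<beta>' \<and>
        (\<exists>g\<in>carrier G. \<forall>e\<in>S. \<forall>x\<in>cell_grp I e. \<beta>' e x = inv\<^bsub>G\<^esub> g \<otimes>\<^bsub>G\<^esub> \<beta> e x \<otimes>\<^bsub>G\<^esub> g)}"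

definition Rep_cell ::
  "'g monoid \<Rightarrow> 'g topology \<Rightarrow> 'h monoid \<Rightarrow> 'h topology \<Rightarrow> 'a topology \<Rightarrow> ('g \<times> 'a) set
    \<Rightarrow> 'a set set \<Rightarrow> ('a set \<Rightarrow> 'g \<Rightarrow> 'h) set set" where
  "Rep_cell \<Gamma> T G TG X I S =
     {\<beta>. cell_rep \<Gamma> T G TG X I S \<beta>} // rep_rel \<Gamma> T G TG X I S"

text \<open>Elements of \<overline>Rep: families (b_e) of conjugacy classes b_e \<in> \<overline>Hom(I(e),G), with
  b_e = b_f|I(e) for f \<le> e. A family is represented by a family of representatives;
  two representing families give the same element iff they are conjugate cell by cell.\<close>
definition bar_rep ::
  "'g monoid \<Rightarrow> 'g topology \<Rightarrow> 'h monoid \<Rightarrow> 'h topology \<Rightarrow> 'a topology \<Rightarrow> ('g \<times> 'a) set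
    \<Rightarrow> 'a set set \<Rightarrow> ('a set \<Rightarrow> 'g \<Rightarrow> 'h) \<Rightarrow> bool" where
  "bar_rep \<Gamma> T G TG X I S b \<longleftrightarrow>
     (\<forall>e\<in>S. cont_hom \<Gamma> T (cell_grp I e) G TG (b e)) \<and>
     (\<forall>e\<in>S. \<forall>f\<in>S. is_face X f e \<longrightarrow> conj_on G (cell_grp I e) (b f) (b e))"

definition bar_rel ::
  "'g monoid \<Rightarrow> 'g topology \<Rightarrow> 'h monoid \<Rightarrow> 'h topology \<Rightarrow> 'a topology \<Rightarrow> ('g \<times> 'a) set
    \<Rightarrow> 'a set set \<Rightarrow> (('a set \<Rightarrow> 'g \<Rightarrow> 'h) \<times> ('a set \<Rightarrow> 'g \<Rightarrow> 'h)) set" where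
  "bar_rel \<Gamma> T G TG X I S =
     {(b, b'). bar_rep \<Gamma> T G TG X I S b \<and> bar_rep \<Gamma> T G TG X I S b' \<and>
        (\<forall>e\<in>S. conj_on G (cell_grp I e) (b e) (b' e))}"

definition Rep_bar ::
  "'g monoid \<Rightarrow> 'g topology \<Rightarrow> 'h monoid \<Rightarrow> 'h topology \<Rightarrow> 'a topology \<Rightarrow> ('g \<times> 'a) set
    \<Rightarrow> 'a set set \<Rightarrow> ('a set \<Rightarrow> 'g \<Rightarrow> 'h) set set" where
  "Rep_bar \<Gamma> T G TG X I S =
     {b. bar_rep \<Gamma> T G TG X I S b} // bar_rel \<Gamma> T G TG X I S"

text \<open>Restriction maps on classes: a class is sent to the class (for the smaller cell set S)
  of the restrictions of its members; a family restricted to S is the same function,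
  of which only the values on cells in S matter.\<close>
definition res_rep ::
  "'g monoid \<Rightarrow> 'g topology \<Rightarrow> 'h monoid \<Rightarrow> 'h topology \<Rightarrow> 'a topology \<Rightarrow> ('g \<times> 'a) set
    \<Rightarrow> 'a set set \<Rightarrow> ('a set \<Rightarrow> 'g \<Rightarrow> 'h) set \<Rightarrow> ('a set \<Rightarrow> 'g \<Rightarrow> 'h) set" where
  "res_rep \<Gamma> T G TG X I S Cl = rep_rel \<Gamma> T G TG X I S `` Cl"

definition res_bar ::
  "'g monoid \<Rightarrow> 'g topology \<Rightarrow> 'h monoid \<Rightarrow> 'h topology \<Rightarrow> 'a topology \<Rightarrow> ('g \<times> 'a) set
    \<Rightarrow> 'a set set \<Rightarrow> ('a set \<Rightarrow> 'g \<Rightarrow> 'h) set \<Rightarrow> ('a set \<Rightarrow> 'g \<Rightarrow> 'h) set" where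
  "res_bar \<Gamma> T G TG X I S Cl = bar_rel \<Gamma> T G TG X I S `` Cl"

end

theory Submission
  imports Defs
begin

lemma sumsq_cont: "continuous_map (powertop_real UNIV) euclideanreal (\<lambda>x::nat\<Rightarrow>real. \<Sum>i<d. (x i)\<^sup>2)"
proof (rule continuous_map_sum)
  fix i :: nat
  have "continuous_map (powertop_real UNIV) euclideanreal (\<lambda>x. x i)"
    by (rule continuous_map_product_projection) simp
  then show "continuous_map (powertop_real UNIV) euclidean (\<lambda>x::nat\<Rightarrow>real. (x i)\<^sup>2)"
    unfolding power2_eq_square by (intro continuous_map_real_mult)
qed simp

lemma disc_closed: "closedin (powertop_real UNIV) (disc_set d)"
proof -
  have "disc_set d = topspace (Euclidean_space d) \<inter> {x \<in> topspace (powertop_real UNIV). (\<Sum>i<d. (x i)\<^sup>2) \<in> {..1}}"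
    by (auto simp: disc_set_def)
  moreover have "closedin (powertop_real UNIV) {x \<in> topspace (powertop_real UNIV). (\<Sum>i<d. (x i)\<^sup>2) \<in> {..1}}"
    by (rule closedin_continuous_map_preimage[OF sumsq_cont]) auto
  ultimately show ?thesis using closedin_Int[OF closedin_Euclidean_space] by simp
qed

lemma sphere_closed: "closedin (powertop_real UNIV) (sphere_set d)"
proof -
  have "sphere_set d = topspace (Euclidean_space d) \<inter> {x \<in> topspace (powertop_real UNIV). (\<Sum>i<d. (x i)\<^sup>2) \<in> {1}}"
    by (auto simp: sphere_set_def)
  moreover have "closedin (powertop_real UNIV) {x \<in> topspace (powertop_real UNIV). (\<Sum>i<d. (x i)\<^sup>2) \<in> {1}}"
    by (rule closedin_continuous_map_preimage[OF sumsq_cont]) auto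
  ultimately show ?thesis using closedin_Int[OF closedin_Euclidean_space] by simp
qed

lemma disc_compact: "compactin (powertop_real UNIV) (disc_set d)"
proof (rule closed_compactin[OF _ _ disc_closed])
  show "compactin (powertop_real UNIV) (PiE UNIV (\<lambda>i. if i < d then {-1..1} else {0}))"
    by (auto simp: compactin_PiE)
  show "disc_set d \<subseteq> PiE UNIV (\<lambda>i. if i < d then {-1..1} else {0})"
  proof
    fix x assume x: "x \<in> disc_set d"
    { fix i assume "i < d"
      have "(x i)\<^sup>2 \<le> (\<Sum>j<d. (x j)\<^sup>2)"
        using \<open>i<d\<close> by (intro member_le_sum) auto
      also have "\<dots> \<le> 1" using x by (auto simp: disc_set_def)
      finally have "\<bar>x i\<bar> \<le> 1" by (simp add: abs_square_le_1)
      hence "x i \<in> {-1..1}" by auto }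
    then show "x \<in> PiE UNIV (\<lambda>i. if i < d then {-1..1} else {0})"
      using x by (auto simp: disc_set_def topspace_Euclidean_space)
  qed
qed

lemma compact_disc_top: "compactin (disc_top d) (disc_set d)"
  "compactin (disc_top d) (sphere_set d)"
proof -
  have ds: "disc_set d \<subseteq> topspace (Euclidean_space d)" "sphere_set d \<subseteq> disc_set d"
    by (auto simp: disc_set_def sphere_set_def)
  have c1: "compactin (Euclidean_space d) (disc_set d)"
    unfolding Euclidean_space_def compactin_subtopology
    using disc_compact ds by (auto simp: topspace_Euclidean_space)
  then show "compactin (disc_top d) (disc_set d)"
    by (simp add: disc_top_def compactin_subtopology)
  have "compactin (Euclidean_space d) (sphere_set d)"
  proof (rule closed_compactin[OF c1 ds(2)])
    show "closedin (Euclidean_space d) (sphere_set d)"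
      unfolding Euclidean_space_def using sphere_closed ds
      by (intro closedin_subset_topspace) (auto simp: topspace_Euclidean_space)
  qed
  then show "compactin (disc_top d) (sphere_set d)"
    using ds by (simp add: disc_top_def compactin_subtopology)
qed

lemma proj_E: "continuous_map (Euclidean_space d) euclideanreal (\<lambda>x. x i)"
  unfolding Euclidean_space_def
  by (rule continuous_map_from_subtopology, rule continuous_map_product_projection) simp

lemma sphere_in_closure: "sphere_set d \<subseteq> disc_top d closure_of (disc_set d - sphere_set d)"
proof
  fix x assume x: "x \<in> sphere_set d"
  hence xE: "x \<in> topspace (Euclidean_space d)" and xs: "(\<Sum>i<d. (x i)\<^sup>2) = 1"
    by (auto simp: sphere_set_def)
  define h where "h = (\<lambda>t::real. \<lambda>i. if i < d then t * x i else 0)"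
  have hE: "continuous_map euclideanreal (Euclidean_space d) h"
    unfolding h_def continuous_map_componentwise_Euclidean_space
    by (auto intro!: continuous_intros)
  have sq: "(\<Sum>i<d. (h t i)\<^sup>2) = t\<^sup>2" for t
  proof -
    have "(\<Sum>i<d. (h t i)\<^sup>2) = (\<Sum>i<d. t\<^sup>2 * (x i)\<^sup>2)"
      by (rule sum.cong) (auto simp: h_def power_mult_distrib)
    also have "\<dots> = t\<^sup>2" using xs by (simp add: sum_distrib_left[symmetric])
    finally show ?thesis .
  qed
  have hin: "h t \<in> disc_set d" if "t \<in> {0..1}" for t
    using that sq[of t] hE by (auto simp: disc_set_def continuous_map_def abs_square_le_1)
  have hc: "continuous_map (top_of_set {0..1}) (disc_top d) h"
    unfolding disc_top_def continuous_map_in_subtopology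
    using hin by (auto intro: continuous_map_from_subtopology[OF hE])
  have h1: "h 1 = x"
    using xE by (auto simp: h_def topspace_Euclidean_space)
  have xdisc: "x \<in> topspace (disc_top d)"
    using x by (auto simp: disc_top_def sphere_set_def disc_set_def)
  show "x \<in> disc_top d closure_of (disc_set d - sphere_set d)"
    unfolding in_closure_of
  proof (intro conjI allI impI xdisc)
    fix T assume T: "x \<in> T \<and> openin (disc_top d) T"
    have "openin (top_of_set {0..1}) {t \<in> topspace (top_of_set {0..1}). h t \<in> T}"
      using openin_continuous_map_preimage[OF hc] T by blast
    hence op: "openin (top_of_set {0..1::real}) {t \<in> {0..1}. h t \<in> T}" by simp
    have "1 \<in> {t \<in> {0..1::real}. h t \<in> T}" using T h1 by auto
    then obtain e where e: "e > 0" "\<And>t. t \<in> {0..1} \<Longrightarrow> dist t 1 < e \<Longrightarrow> t \<in> {t \<in> {0..1}. h t \<in> T}"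
      using op unfolding openin_euclidean_subtopology_iff by blast
    define t where "t = max 0 (1 - e/2)"
    have t01: "t \<in> {0..1}" "t < 1" "0 \<le> t" using e by (auto simp: t_def)
    have "dist t 1 < e" using e by (auto simp: t_def dist_real_def)
    hence "h t \<in> T" using e(2)[OF t01(1)] by auto
    moreover have "h t \<in> disc_set d - sphere_set d"
    proof -
      have "t\<^sup>2 < 1" using t01 by (simp add: abs_square_less_1)
      thus ?thesis using hin[OF t01(1)] sq[of t] by (auto simp: sphere_set_def)
    qed
    ultimately show "\<exists>y. y \<in> disc_set d - sphere_set d \<and> y \<in> T" by blast
  qed
qed

lemma sphere_conn2: "connectedin (Euclidean_space 2) (sphere_set 2)"
proof -
  define g where "g = (\<lambda>t::real. \<lambda>i::nat. if i < 2 then (if i = 0 then cos t else sin t) else 0)"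
  have gc: "continuous_map euclideanreal (Euclidean_space 2) g"
    unfolding g_def continuous_map_componentwise_Euclidean_space
    by (auto intro!: continuous_intros)
  have "sphere_set 2 = g ` {0..2*pi}"
  proof
    show "sphere_set 2 \<subseteq> g ` {0..2*pi}"
    proof
      fix x assume x: "x \<in> sphere_set 2"
      hence "(x 0)\<^sup>2 + (x 1)\<^sup>2 = 1" by (simp add: sphere_set_def numeral_2_eq_2)
      then obtain t where t: "0 \<le> t" "t < 2*pi" "x 0 = cos t" "x 1 = sin t"
        using sincos_total_2pi by blast
      have "x = g t"
      proof
        fix i show "x i = g t i"
          using x t by (auto simp: g_def sphere_set_def topspace_Euclidean_space less_2_cases_iff)
      qed
      thus "x \<in> g ` {0..2*pi}" using t by auto
    qed
    show "g ` {0..2*pi} \<subseteq> sphere_set 2"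
      using gc by (auto simp: g_def sphere_set_def numeral_2_eq_2 topspace_Euclidean_space)
  qed
  moreover have "connectedin (Euclidean_space 2) (g ` {0..2*pi})"
    by (rule connectedin_continuous_map_image[OF gc]) simp
  ultimately show ?thesis by simp
qed

lemma sphere_conn_step:
  assumes d: "d \<ge> 1" and conn: "connectedin (Euclidean_space d) (sphere_set d)"
  shows "connectedin (Euclidean_space (Suc d)) (sphere_set (Suc d))"
proof -
  define g where "g = (\<lambda>p::real \<times> (nat\<Rightarrow>real). \<lambda>i::nat. if i < Suc d then (if i < d then sin (fst p) * snd p i else cos (fst p)) else 0)"
  have gc: "continuous_map (prod_topology euclideanreal (Euclidean_space d)) (Euclidean_space (Suc d)) g"
    unfolding g_def continuous_map_componentwise_Euclidean_space
  proof (intro allI impI)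
    fix i assume "i < Suc d"
    have s: "continuous_map (prod_topology euclideanreal (Euclidean_space d)) euclideanreal (\<lambda>p. sin (fst p))"
    proof -
      have "continuous_map euclideanreal euclideanreal sin" by (simp add: continuous_on_sin continuous_on_id)
      then show ?thesis by (rule continuous_map_compose[OF continuous_map_fst, unfolded o_def])
    qed
    have c: "continuous_map (prod_topology euclideanreal (Euclidean_space d)) euclideanreal (\<lambda>p. cos (fst p))"
    proof -
      have "continuous_map euclideanreal euclideanreal cos" by (simp add: continuous_on_cos continuous_on_id)
      then show ?thesis by (rule continuous_map_compose[OF continuous_map_fst, unfolded o_def])
    qed
    have p: "continuous_map (prod_topology euclideanreal (Euclidean_space d)) euclideanreal (\<lambda>p. snd p i)"
      by (rule continuous_map_compose[OF continuous_map_snd proj_E, unfolded o_def])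
    show "continuous_map (prod_topology euclideanreal (Euclidean_space d)) euclideanreal
          (\<lambda>x. if i < d then sin (fst x) * snd x i else cos (fst x))"
      using s c p by (cases "i < d") (auto intro: continuous_map_real_mult)
  qed
  have "sphere_set (Suc d) = g ` ({0..pi} \<times> sphere_set d)"
  proof
    show "sphere_set (Suc d) \<subseteq> g ` ({0..pi} \<times> sphere_set d)"
    proof
      fix x assume x: "x \<in> sphere_set (Suc d)"
      hence xs: "(\<Sum>i<d. (x i)\<^sup>2) + (x d)\<^sup>2 = 1" and xE: "\<And>i. i > d \<Longrightarrow> x i = 0"
        by (auto simp: sphere_set_def topspace_Euclidean_space)
      define c where "c = x d"
      have S0: "(\<Sum>i<d. (x i)\<^sup>2) \<ge> 0" by (simp add: sum_nonneg)
      hence "c\<^sup>2 \<le> 1" using xs by (simp add: c_def)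
      hence "\<bar>c\<bar> \<le> 1" by (simp add: abs_square_le_1)
      hence cb: "-1 \<le> c" "c \<le> 1" by auto
      define \<theta> where "\<theta> = arccos c"
      have th: "\<theta> \<in> {0..pi}" "cos \<theta> = c" "sin \<theta> = sqrt (1 - c\<^sup>2)"
        using cb arccos_bounded by (auto simp: \<theta>_def sin_arccos)
      define r where "r = sqrt (1 - c\<^sup>2)"
      have r2: "r\<^sup>2 = (\<Sum>i<d. (x i)\<^sup>2)" using xs \<open>c\<^sup>2 \<le> 1\<close> by (simp add: r_def c_def)
      show "x \<in> g ` ({0..pi} \<times> sphere_set d)"
      proof (cases "r = 0")
        case True
        hence "(\<Sum>i<d. (x i)\<^sup>2) = 0" using r2 by simp
        hence x0: "\<And>i. i < d \<Longrightarrow> x i = 0" using sum_nonneg_eq_0_iff[of "{..<d}" "\<lambda>i. (x i)\<^sup>2"] by auto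
        define y where "y = (\<lambda>i::nat. if i = 0 then 1 else (0::real))"
        have y: "y \<in> sphere_set d" using d
          by (auto simp: y_def sphere_set_def topspace_Euclidean_space if_distrib[where f="\<lambda>x. x^2"] cong: if_cong)
        have "x = g (\<theta>, y)"
        proof
          fix i show "x i = g (\<theta>, y) i"
            using x0 xE th True by (auto simp: g_def r_def c_def linorder_neq_iff less_Suc_eq)
        qed
        thus ?thesis using th y by auto
      next
        case False
        hence rp: "r > 0" using \<open>c\<^sup>2 \<le> 1\<close> by (simp add: r_def)
        define y where "y = (\<lambda>i::nat. if i < d then x i / r else 0)"
        have "(\<Sum>i<d. (y i)\<^sup>2) = (\<Sum>i<d. (x i)\<^sup>2) / r\<^sup>2"
          by (simp add: y_def power_divide sum_divide_distrib)
        also have "\<dots> = 1" using r2 rp by (metis less_numeral_extra(3) power_not_zero divide_self)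
        finally have y: "y \<in> sphere_set d" by (auto simp: y_def sphere_set_def topspace_Euclidean_space)
        have "x = g (\<theta>, y)"
        proof
          fix i show "x i = g (\<theta>, y) i"
            using xE th(2) rp th(3)[folded r_def] by (auto simp: g_def c_def y_def linorder_neq_iff less_Suc_eq)
        qed
        thus ?thesis using th y by auto
      qed
    qed
    show "g ` ({0..pi} \<times> sphere_set d) \<subseteq> sphere_set (Suc d)"
    proof
      fix z assume "z \<in> g ` ({0..pi} \<times> sphere_set d)"
      then obtain t y where z: "z = g (t, y)" and y: "y \<in> sphere_set d" by auto
      have ys: "(\<Sum>i<d. (y i)\<^sup>2) = 1" using y by (simp add: sphere_set_def)
      have "(\<Sum>i<Suc d. (z i)\<^sup>2) = (\<Sum>i<d. (sin t)\<^sup>2 * (y i)\<^sup>2) + (cos t)\<^sup>2"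
        by (simp add: z g_def power_mult_distrib)
      also have "\<dots> = 1" by (simp add: sum_distrib_left[symmetric] ys)
      finally show "z \<in> sphere_set (Suc d)"
        by (auto simp: z g_def sphere_set_def topspace_Euclidean_space)
    qed
  qed
  moreover have "connectedin (Euclidean_space (Suc d)) (g ` ({0..pi} \<times> sphere_set d))"
    by (rule connectedin_continuous_map_image[OF gc]) (simp add: connectedin_Times conn)
  ultimately show ?thesis by simp
qed

lemma sphere_conn: "d \<ge> 2 \<Longrightarrow> connectedin (Euclidean_space d) (sphere_set d)"
proof (induction d rule: dec_induct)
  case base thus ?case by (rule sphere_conn2)
next
  case (step n) thus ?case using sphere_conn_step[of n] by simp
qed

lemma sphere_conn_disc: "d \<ge> 2 \<Longrightarrow> connectedin (disc_top d) (sphere_set d)"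
  using sphere_conn[of d] by (auto simp: disc_top_def connectedin_subtopology sphere_set_def disc_set_def)

lemma emb_cont: "embedding_map X Y f \<Longrightarrow> continuous_map X Y f"
  unfolding embedding_map_def using homeomorphic_imp_continuous_map continuous_map_in_subtopology by blast

lemma topspace_disc_top [simp]: "topspace (disc_top d) = disc_set d"
  by (auto simp: disc_top_def disc_set_def)

lemma sphere_sub_disc: "sphere_set d \<subseteq> disc_set d"
  by (auto simp: disc_set_def sphere_set_def)

lemma sphere_ne: "d \<ge> 1 \<Longrightarrow> sphere_set d \<noteq> {}"
proof -
  assume d: "d \<ge> 1"
  define y where "y = (\<lambda>i::nat. if i = 0 then 1 else (0::real))"
  have "y \<in> sphere_set d" using d
    by (auto simp: y_def sphere_set_def topspace_Euclidean_space if_distrib[where f="\<lambda>x. x^2"] cong: if_cong)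
  thus ?thesis by auto
qed

lemma lm_pt:
  assumes lm: "locally_maximal X I" and pt: "p \<in> topspace X"
  shows "\<exists>U. openin X U \<and> p \<in> U \<and> (\<forall>u\<in>U. fiber I u \<subseteq> fiber I p)"
proof -
  have ex: "\<exists>V. openin X V \<and> p \<in> V \<and> V \<subseteq> topspace X" using pt by auto
  have "\<forall>B. (\<exists>V. openin X V \<and> p \<in> V \<and> V \<subseteq> B) \<longrightarrow>
        (\<exists>U \<rho>. openin X U \<and> p \<in> U \<and> U \<subseteq> B \<and>
           continuous_map (prod_topology (top_of_set {0..1::real}) (subtopology X U))
                          (subtopology X U) \<rho> \<and>
           (\<forall>u\<in>U. \<rho> (0, u) = u \<and> \<rho> (1, u) = p) \<and>
           (\<forall>t\<in>{0..1}. \<forall>u\<in>U. fiber I u \<subseteq> fiber I (\<rho> (t, u))))"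
    using lm pt unfolding locally_maximal_def by (rule bspec)
  hence "(\<exists>V. openin X V \<and> p \<in> V \<and> V \<subseteq> topspace X) \<longrightarrow>
        (\<exists>U \<rho>. openin X U \<and> p \<in> U \<and> U \<subseteq> topspace X \<and>
           continuous_map (prod_topology (top_of_set {0..1::real}) (subtopology X U))
                          (subtopology X U) \<rho> \<and>
           (\<forall>u\<in>U. \<rho> (0, u) = u \<and> \<rho> (1, u) = p) \<and>
           (\<forall>t\<in>{0..1}. \<forall>u\<in>U. fiber I u \<subseteq> fiber I (\<rho> (t, u))))"
    by (rule spec)
  hence "\<exists>U \<rho>. openin X U \<and> p \<in> U \<and> U \<subseteq> topspace X \<and>
           continuous_map (prod_topology (top_of_set {0..1::real}) (subtopology X U))
                          (subtopology X U) \<rho> \<and>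
           (\<forall>u\<in>U. \<rho> (0, u) = u \<and> \<rho> (1, u) = p) \<and>
           (\<forall>t\<in>{0..1}. \<forall>u\<in>U. fiber I u \<subseteq> fiber I (\<rho> (t, u)))"
    using ex by (rule mp)
  then obtain U \<rho> where U: "openin X U" "p \<in> U" and r1: "\<forall>u\<in>U. \<rho> (0, u) = u \<and> \<rho> (1, u) = p"
    and rf: "\<forall>t\<in>{0..1::real}. \<forall>u\<in>U. fiber I u \<subseteq> fiber I (\<rho> (t, u))"
    by (elim exE conjE)
  have "\<forall>u\<in>U. fiber I u \<subseteq> fiber I p"
  proof
    fix u assume u: "u \<in> U"
    have "fiber I u \<subseteq> fiber I (\<rho> (1, u))" using rf u by simp
    thus "fiber I u \<subseteq> fiber I p" using r1 u by simp
  qed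
  thus ?thesis using U by blast
qed

lemma grp_c1: "group G \<Longrightarrow> a \<in> carrier G \<Longrightarrow> inv\<^bsub>G\<^esub> \<one>\<^bsub>G\<^esub> \<otimes>\<^bsub>G\<^esub> a \<otimes>\<^bsub>G\<^esub> \<one>\<^bsub>G\<^esub> = a"
  by (simp add: monoid.inv_one monoid.l_one monoid.r_one group.is_monoid)

lemma grp_c2: assumes G: "group G" and g: "g \<in> carrier G" and a: "a \<in> carrier G"
  shows "inv\<^bsub>G\<^esub> (inv\<^bsub>G\<^esub> g) \<otimes>\<^bsub>G\<^esub> (inv\<^bsub>G\<^esub> g \<otimes>\<^bsub>G\<^esub> a \<otimes>\<^bsub>G\<^esub> g) \<otimes>\<^bsub>G\<^esub> inv\<^bsub>G\<^esub> g = a"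
proof -
  interpret group G by (rule G)
  have h1: "g \<otimes>\<^bsub>G\<^esub> (inv\<^bsub>G\<^esub> g \<otimes>\<^bsub>G\<^esub> x) = x" if "x \<in> carrier G" for x
    using g that by (simp add: m_assoc[symmetric])
  show ?thesis using g a by (simp add: m_assoc h1)
qed

lemma grp_c3: assumes G: "group G" and g: "g \<in> carrier G" and h: "h \<in> carrier G" and a: "a \<in> carrier G"
  shows "inv\<^bsub>G\<^esub> h \<otimes>\<^bsub>G\<^esub> (inv\<^bsub>G\<^esub> g \<otimes>\<^bsub>G\<^esub> a \<otimes>\<^bsub>G\<^esub> g) \<otimes>\<^bsub>G\<^esub> h
       = inv\<^bsub>G\<^esub> (g \<otimes>\<^bsub>G\<^esub> h) \<otimes>\<^bsub>G\<^esub> a \<otimes>\<^bsub>G\<^esub> (g \<otimes>\<^bsub>G\<^esub> h)"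
proof -
  interpret group G by (rule G)
  show ?thesis using g h a by (simp add: m_assoc inv_mult_group)
qed

lemma grp_c4: assumes G: "group G" and g: "g \<in> carrier G" and a: "a \<in> carrier G"
  shows "inv\<^bsub>G\<^esub> g \<otimes>\<^bsub>G\<^esub> a \<otimes>\<^bsub>G\<^esub> g \<in> carrier G"
  using G g a by (simp add: group.subgroupE(4) group.is_monoid monoid.m_closed group.inv_closed)

lemma conj_refl: "group G \<Longrightarrow> (\<forall>x\<in>K. \<phi> x \<in> carrier G) \<Longrightarrow> conj_on G K \<phi> \<phi>"
  unfolding conj_on_def by (rule bexI[of _ "\<one>\<^bsub>G\<^esub>"]) (auto simp: grp_c1 group.is_monoid monoid.one_closed)

lemma conj_sym: assumes G: "group G" and c: "\<forall>x\<in>K. \<phi> x \<in> carrier G" and h: "conj_on G K \<phi> \<psi>"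
  shows "conj_on G K \<psi> \<phi>"
proof -
  obtain g where g: "g \<in> carrier G" "\<forall>x\<in>K. \<psi> x = inv\<^bsub>G\<^esub> g \<otimes>\<^bsub>G\<^esub> \<phi> x \<otimes>\<^bsub>G\<^esub> g"
    using h unfolding conj_on_def by blast
  have ig: "inv\<^bsub>G\<^esub> g \<in> carrier G" using G g(1) by (simp add: group.inv_closed)
  show ?thesis unfolding conj_on_def
    using g c grp_c2[OF G g(1)] ig by (intro bexI[of _ "inv\<^bsub>G\<^esub> g"]) auto
qed

lemma conj_trans: assumes G: "group G" and c: "\<forall>x\<in>K. \<phi> x \<in> carrier G"
  and h1: "conj_on G K \<phi> \<psi>" and h2: "conj_on G K \<psi> k3"
  shows "conj_on G K \<phi> k3"
proof -
  obtain g where g: "g \<in> carrier G" "\<forall>x\<in>K. \<psi> x = inv\<^bsub>G\<^esub> g \<otimes>\<^bsub>G\<^esub> \<phi> x \<otimes>\<^bsub>G\<^esub> g"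
    using h1 unfolding conj_on_def by blast
  obtain h where h: "h \<in> carrier G" "\<forall>x\<in>K. k3 x = inv\<^bsub>G\<^esub> h \<otimes>\<^bsub>G\<^esub> \<psi> x \<otimes>\<^bsub>G\<^esub> h"
    using h2 unfolding conj_on_def by blast
  have gh: "g \<otimes>\<^bsub>G\<^esub> h \<in> carrier G" using G g(1) h(1) by (simp add: group.is_monoid monoid.m_closed)
  show ?thesis unfolding conj_on_def
    using g h c grp_c3[OF G g(1) h(1)] gh by (intro bexI[of _ "g \<otimes>\<^bsub>G\<^esub> h"]) auto
qed

lemma conj_mono: "K' \<subseteq> K \<Longrightarrow> conj_on G K \<phi> \<psi> \<Longrightarrow> conj_on G K' \<phi> \<psi>"
  unfolding conj_on_def by blast

lemma cont_hom_mono: "K' \<subseteq> K \<Longrightarrow> cont_hom \<Gamma> T K G TG \<phi> \<Longrightarrow> cont_hom \<Gamma> T K' G TG \<phi>"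
  unfolding cont_hom_def
proof (elim conjE, intro conjI)
  assume "K' \<subseteq> K" "continuous_map (subtopology T K) TG \<phi>"
  thus "continuous_map (subtopology T K') TG \<phi>"
    by (metis continuous_map_from_subtopology inf.absorb_iff2 subtopology_subtopology)
qed blast+

lemma cont_hom_car: "cont_hom \<Gamma> T K G TG \<phi> \<Longrightarrow> x \<in> K \<Longrightarrow> \<phi> x \<in> carrier G"
  unfolding cont_hom_def by blast

locale gctx =
  fixes \<Gamma> :: "'g monoid" and T :: "'g topology" and G :: "'h monoid" and TG :: "'h topology"
    and X :: "'a topology" and I :: "('g \<times> 'a) set"
  assumes G: "group G"
begin

abbreviation "CR S \<equiv> cell_rep \<Gamma> T G TG X I S"
abbreviation "RR S \<equiv> rep_rel \<Gamma> T G TG X I S"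
abbreviation "BRp S \<equiv> bar_rep \<Gamma> T G TG X I S"
abbreviation "BR S \<equiv> bar_rel \<Gamma> T G TG X I S"

lemma CR_hom: "CR S \<beta> \<Longrightarrow> e \<in> S \<Longrightarrow> cont_hom \<Gamma> T (cell_grp I e) G TG (\<beta> e)"
  unfolding cell_rep_def by (elim conjE bspec)

lemma CR_car: "CR S \<beta> \<Longrightarrow> e \<in> S \<Longrightarrow> x \<in> cell_grp I e \<Longrightarrow> \<beta> e x \<in> carrier G"
  by (rule cont_hom_car[OF CR_hom])

lemma BR_hom: "BRp S \<beta> \<Longrightarrow> e \<in> S \<Longrightarrow> cont_hom \<Gamma> T (cell_grp I e) G TG (\<beta> e)"
  unfolding bar_rep_def by (elim conjE bspec)

lemma BR_car: "BRp S \<beta> \<Longrightarrow> e \<in> S \<Longrightarrow> x \<in> cell_grp I e \<Longrightarrow> \<beta> e x \<in> carrier G"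
  by (rule cont_hom_car[OF BR_hom])

lemma CR_mono: "S' \<subseteq> S \<Longrightarrow> CR S \<beta> \<Longrightarrow> CR S' \<beta>"
  unfolding cell_rep_def by blast

lemma BRp_mono: "S' \<subseteq> S \<Longrightarrow> BRp S \<beta> \<Longrightarrow> BRp S' \<beta>"
  unfolding bar_rep_def by blast

lemma RR_iff: "(\<beta>, \<beta>') \<in> RR S \<longleftrightarrow> CR S \<beta> \<and> CR S \<beta>' \<and>
   (\<exists>g\<in>carrier G. \<forall>e\<in>S. \<forall>x\<in>cell_grp I e. \<beta>' e x = inv\<^bsub>G\<^esub> g \<otimes>\<^bsub>G\<^esub> \<beta> e x \<otimes>\<^bsub>G\<^esub> g)"
  unfolding rep_rel_def by simp

lemma BR_iff: "(\<beta>, \<beta>') \<in> BR S \<longleftrightarrow> BRp S \<beta> \<and> BRp S \<beta>' \<and>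
   (\<forall>e\<in>S. conj_on G (cell_grp I e) (\<beta> e) (\<beta>' e))"
  unfolding bar_rel_def by simp

lemma RR_refl: assumes c: "CR S \<beta>" shows "(\<beta>, \<beta>) \<in> RR S"
proof -
  have 1: "\<one>\<^bsub>G\<^esub> \<in> carrier G" using G by (simp add: group.is_monoid monoid.one_closed)
  have "\<forall>e\<in>S. \<forall>x\<in>cell_grp I e. \<beta> e x = inv\<^bsub>G\<^esub> \<one>\<^bsub>G\<^esub> \<otimes>\<^bsub>G\<^esub> \<beta> e x \<otimes>\<^bsub>G\<^esub> \<one>\<^bsub>G\<^esub>"
  proof (intro ballI)
    fix e x assume "e \<in> S" "x \<in> cell_grp I e"
    hence "\<beta> e x \<in> carrier G" by (rule CR_car[OF c])
    thus "\<beta> e x = inv\<^bsub>G\<^esub> \<one>\<^bsub>G\<^esub> \<otimes>\<^bsub>G\<^esub> \<beta> e x \<otimes>\<^bsub>G\<^esub> \<one>\<^bsub>G\<^esub>" using grp_c1[OF G] by simp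
  qed
  hence "\<exists>g\<in>carrier G. \<forall>e\<in>S. \<forall>x\<in>cell_grp I e. \<beta> e x = inv\<^bsub>G\<^esub> g \<otimes>\<^bsub>G\<^esub> \<beta> e x \<otimes>\<^bsub>G\<^esub> g"
    using 1 by (rule bexI)
  thus ?thesis unfolding RR_iff using c by simp
qed

lemma RR_sym: assumes "(\<beta>, \<beta>') \<in> RR S" shows "(\<beta>', \<beta>) \<in> RR S"
proof -
  have c: "CR S \<beta>" "CR S \<beta>'" using assms unfolding RR_iff by simp_all
  obtain g where g: "g \<in> carrier G"
    and h: "\<forall>e\<in>S. \<forall>x\<in>cell_grp I e. \<beta>' e x = inv\<^bsub>G\<^esub> g \<otimes>\<^bsub>G\<^esub> \<beta> e x \<otimes>\<^bsub>G\<^esub> g"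
    using assms unfolding RR_iff by (elim conjE bexE)
  have ig: "inv\<^bsub>G\<^esub> g \<in> carrier G" using G g by (simp add: group.inv_closed)
  have "\<forall>e\<in>S. \<forall>x\<in>cell_grp I e. \<beta> e x = inv\<^bsub>G\<^esub> (inv\<^bsub>G\<^esub> g) \<otimes>\<^bsub>G\<^esub> \<beta>' e x \<otimes>\<^bsub>G\<^esub> inv\<^bsub>G\<^esub> g"
  proof (intro ballI)
    fix e x assume ex: "e \<in> S" "x \<in> cell_grp I e"
    hence "\<beta> e x \<in> carrier G" by (rule CR_car[OF c(1)])
    thus "\<beta> e x = inv\<^bsub>G\<^esub> (inv\<^bsub>G\<^esub> g) \<otimes>\<^bsub>G\<^esub> \<beta>' e x \<otimes>\<^bsub>G\<^esub> inv\<^bsub>G\<^esub> g"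
      using grp_c2[OF G g] h ex by simp
  qed
  hence "\<exists>g\<in>carrier G. \<forall>e\<in>S. \<forall>x\<in>cell_grp I e. \<beta> e x = inv\<^bsub>G\<^esub> g \<otimes>\<^bsub>G\<^esub> \<beta>' e x \<otimes>\<^bsub>G\<^esub> g"
    using ig by (rule bexI)
  thus ?thesis unfolding RR_iff using c by simp
qed

lemma RR_trans: assumes "(\<beta>1, \<beta>2) \<in> RR S" "(\<beta>2, \<beta>3) \<in> RR S" shows "(\<beta>1, \<beta>3) \<in> RR S"
proof -
  have c: "CR S \<beta>1" "CR S \<beta>3" using assms unfolding RR_iff by simp_all
  obtain g where g: "g \<in> carrier G"
    and h: "\<forall>e\<in>S. \<forall>x\<in>cell_grp I e. \<beta>2 e x = inv\<^bsub>G\<^esub> g \<otimes>\<^bsub>G\<^esub> \<beta>1 e x \<otimes>\<^bsub>G\<^esub> g"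
    using assms(1) unfolding RR_iff by (elim conjE bexE)
  obtain k where k: "k \<in> carrier G"
    and h2: "\<forall>e\<in>S. \<forall>x\<in>cell_grp I e. \<beta>3 e x = inv\<^bsub>G\<^esub> k \<otimes>\<^bsub>G\<^esub> \<beta>2 e x \<otimes>\<^bsub>G\<^esub> k"
    using assms(2) unfolding RR_iff by (elim conjE bexE)
  have gk: "g \<otimes>\<^bsub>G\<^esub> k \<in> carrier G" using G g k by (simp add: group.is_monoid monoid.m_closed)
  have "\<forall>e\<in>S. \<forall>x\<in>cell_grp I e. \<beta>3 e x = inv\<^bsub>G\<^esub> (g \<otimes>\<^bsub>G\<^esub> k) \<otimes>\<^bsub>G\<^esub> \<beta>1 e x \<otimes>\<^bsub>G\<^esub> (g \<otimes>\<^bsub>G\<^esub> k)"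
  proof (intro ballI)
    fix e x assume ex: "e \<in> S" "x \<in> cell_grp I e"
    hence "\<beta>1 e x \<in> carrier G" by (rule CR_car[OF c(1)])
    thus "\<beta>3 e x = inv\<^bsub>G\<^esub> (g \<otimes>\<^bsub>G\<^esub> k) \<otimes>\<^bsub>G\<^esub> \<beta>1 e x \<otimes>\<^bsub>G\<^esub> (g \<otimes>\<^bsub>G\<^esub> k)"
      using grp_c3[OF G g k] h h2 ex by simp
  qed
  hence "\<exists>g\<in>carrier G. \<forall>e\<in>S. \<forall>x\<in>cell_grp I e. \<beta>3 e x = inv\<^bsub>G\<^esub> g \<otimes>\<^bsub>G\<^esub> \<beta>1 e x \<otimes>\<^bsub>G\<^esub> g"
    using gk by (rule bexI)
  thus ?thesis unfolding RR_iff using c by simp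
qed

lemma RR_mono: assumes S: "S' \<subseteq> S" and h: "(\<beta>, \<beta>') \<in> RR S" shows "(\<beta>, \<beta>') \<in> RR S'"
proof -
  have c: "CR S \<beta>" "CR S \<beta>'" using h unfolding RR_iff by simp_all
  obtain g where g: "g \<in> carrier G"
    and hh: "\<forall>e\<in>S. \<forall>x\<in>cell_grp I e. \<beta>' e x = inv\<^bsub>G\<^esub> g \<otimes>\<^bsub>G\<^esub> \<beta> e x \<otimes>\<^bsub>G\<^esub> g"
    using h unfolding RR_iff by (elim conjE bexE)
  have "\<forall>e\<in>S'. \<forall>x\<in>cell_grp I e. \<beta>' e x = inv\<^bsub>G\<^esub> g \<otimes>\<^bsub>G\<^esub> \<beta> e x \<otimes>\<^bsub>G\<^esub> g"
    using hh S by (auto simp del: )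
  hence "\<exists>g\<in>carrier G. \<forall>e\<in>S'. \<forall>x\<in>cell_grp I e. \<beta>' e x = inv\<^bsub>G\<^esub> g \<otimes>\<^bsub>G\<^esub> \<beta> e x \<otimes>\<^bsub>G\<^esub> g"
    using g by (rule bexI)
  thus ?thesis unfolding RR_iff using CR_mono[OF S c(1)] CR_mono[OF S c(2)] by simp
qed

lemma RR_equiv: "equiv {\<beta>. CR S \<beta>} (RR S)"
proof (rule equivI)
  show "RR S \<subseteq> {\<beta>. CR S \<beta>} \<times> {\<beta>. CR S \<beta>}" by (auto simp: rep_rel_def)
  show "refl_on {\<beta>. CR S \<beta>} (RR S)" by (rule refl_onI) (simp add: RR_refl)
  show "sym (RR S)" unfolding sym_def using RR_sym by blast
  show "trans (RR S)" unfolding trans_def using RR_trans by blast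
qed

lemma BR_refl: "BRp S \<beta> \<Longrightarrow> (\<beta>, \<beta>) \<in> BR S"
proof -
  assume c: "BRp S \<beta>"
  have "\<forall>e\<in>S. conj_on G (cell_grp I e) (\<beta> e) (\<beta> e)"
  proof
    fix e assume e: "e \<in> S"
    show "conj_on G (cell_grp I e) (\<beta> e) (\<beta> e)"
      by (rule conj_refl[OF G]) (intro ballI BR_car[OF c e])
  qed
  thus ?thesis unfolding BR_iff using c by simp
qed

lemma BR_sym: assumes "(\<beta>, \<beta>') \<in> BR S" shows "(\<beta>', \<beta>) \<in> BR S"
proof -
  have c: "BRp S \<beta>" "BRp S \<beta>'" and h: "\<forall>e\<in>S. conj_on G (cell_grp I e) (\<beta> e) (\<beta>' e)"
    using assms unfolding BR_iff by simp_all
  have "\<forall>e\<in>S. conj_on G (cell_grp I e) (\<beta>' e) (\<beta> e)"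
  proof
    fix e assume e: "e \<in> S"
    show "conj_on G (cell_grp I e) (\<beta>' e) (\<beta> e)"
      by (rule conj_sym[OF G _ bspec[OF h e]]) (intro ballI BR_car[OF c(1) e])
  qed
  thus ?thesis unfolding BR_iff using c by simp
qed

lemma BR_trans: assumes "(\<beta>1, \<beta>2) \<in> BR S" "(\<beta>2, \<beta>3) \<in> BR S" shows "(\<beta>1, \<beta>3) \<in> BR S"
proof -
  have c: "BRp S \<beta>1" "BRp S \<beta>3" and h: "\<forall>e\<in>S. conj_on G (cell_grp I e) (\<beta>1 e) (\<beta>2 e)"
    and h2: "\<forall>e\<in>S. conj_on G (cell_grp I e) (\<beta>2 e) (\<beta>3 e)"
    using assms unfolding BR_iff by simp_all
  have "\<forall>e\<in>S. conj_on G (cell_grp I e) (\<beta>1 e) (\<beta>3 e)"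
  proof
    fix e assume e: "e \<in> S"
    show "conj_on G (cell_grp I e) (\<beta>1 e) (\<beta>3 e)"
      by (rule conj_trans[OF G _ bspec[OF h e] bspec[OF h2 e]]) (intro ballI BR_car[OF c(1) e])
  qed
  thus ?thesis unfolding BR_iff using c by simp
qed

lemma BR_mono: assumes S: "S' \<subseteq> S" and h: "(\<beta>, \<beta>') \<in> BR S" shows "(\<beta>, \<beta>') \<in> BR S'"
proof -
  have c: "BRp S \<beta>" "BRp S \<beta>'" and hh: "\<forall>e\<in>S. conj_on G (cell_grp I e) (\<beta> e) (\<beta>' e)"
    using h unfolding BR_iff by simp_all
  have "\<forall>e\<in>S'. conj_on G (cell_grp I e) (\<beta> e) (\<beta>' e)" using hh S by auto
  thus ?thesis unfolding BR_iff using BRp_mono[OF S c(1)] BRp_mono[OF S c(2)] by simp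
qed

lemma BR_equiv: "equiv {\<beta>. BRp S \<beta>} (BR S)"
proof (rule equivI)
  show "BR S \<subseteq> {\<beta>. BRp S \<beta>} \<times> {\<beta>. BRp S \<beta>}" by (auto simp: bar_rel_def)
  show "refl_on {\<beta>. BRp S \<beta>} (BR S)" by (rule refl_onI) (simp add: BR_refl)
  show "sym (BR S)" unfolding sym_def using BR_sym by blast
  show "trans (BR S)" unfolding trans_def using BR_trans by blast
qed

lemma res_rep_class: assumes "S \<subseteq> S'" "CR S' \<beta>"
  shows "res_rep \<Gamma> T G TG X I S (RR S' `` {\<beta>}) = RR S `` {\<beta>}"
  unfolding res_rep_def
proof
  show "RR S `` RR S' `` {\<beta>} \<subseteq> RR S `` {\<beta>}"
    using RR_mono[OF assms(1)] RR_trans by blast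
  show "RR S `` {\<beta>} \<subseteq> RR S `` RR S' `` {\<beta>}"
    using RR_refl[OF assms(2)] by blast
qed

lemma res_bar_class: assumes "S \<subseteq> S'" "BRp S' \<beta>"
  shows "res_bar \<Gamma> T G TG X I S (BR S' `` {\<beta>}) = BR S `` {\<beta>}"
  unfolding res_bar_def
proof
  show "BR S `` BR S' `` {\<beta>} \<subseteq> BR S `` {\<beta>}"
    using BR_mono[OF assms(1)] BR_trans by blast
  show "BR S `` {\<beta>} \<subseteq> BR S `` BR S' `` {\<beta>}"
    using BR_refl[OF assms(2)] by blast
qed

end

locale cwc =
  fixes X :: "'a topology" and C :: "'a set set" and dm :: "'a set \<Rightarrow> nat"
    and \<sigma> :: "'a set \<Rightarrow> (nat \<Rightarrow> real) \<Rightarrow> 'a"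
  assumes cw: "regular_CW X C dm \<sigma>"
begin

lemma haus: "Hausdorff_space X" using cw by (simp add: regular_CW_def)
lemma cell_ne: "e \<in> C \<Longrightarrow> e \<noteq> {}" using cw by (simp add: regular_CW_def)
lemma cell_disj: "e \<in> C \<Longrightarrow> f \<in> C \<Longrightarrow> e \<noteq> f \<Longrightarrow> e \<inter> f = {}" using cw by (simp add: regular_CW_def)
lemma cell_Un: "\<Union>C = topspace X" using cw by (simp add: regular_CW_def)
lemma cell_top: "e \<in> C \<Longrightarrow> e \<subseteq> topspace X" using cell_Un by blast
lemma sig_cont: "e \<in> C \<Longrightarrow> continuous_map (disc_top (dm e)) X (\<sigma> e)"
  using cw by (simp add: regular_CW_def emb_cont)
lemma sig_open: "e \<in> C \<Longrightarrow> \<sigma> e ` (disc_set (dm e) - sphere_set (dm e)) = e"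
  using cw by (simp add: regular_CW_def)
lemma sig_bd: "e \<in> C \<Longrightarrow> \<exists>F. F \<subseteq> C \<and> finite F \<and> (\<forall>f\<in>F. dm f < dm e) \<and> \<sigma> e ` sphere_set (dm e) = \<Union>F"
  using cw by (simp add: regular_CW_def)

definition Fc where "Fc e = (SOME F. F \<subseteq> C \<and> finite F \<and> (\<forall>f\<in>F. dm f < dm e) \<and> \<sigma> e ` sphere_set (dm e) = \<Union>F)"

lemma Fc: assumes "e \<in> C"
  shows "Fc e \<subseteq> C" "finite (Fc e)" "\<And>f. f \<in> Fc e \<Longrightarrow> dm f < dm e" "\<sigma> e ` sphere_set (dm e) = \<Union>(Fc e)"
proof -
  have "Fc e \<subseteq> C \<and> finite (Fc e) \<and> (\<forall>f\<in>Fc e. dm f < dm e) \<and> \<sigma> e ` sphere_set (dm e) = \<Union>(Fc e)"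
    unfolding Fc_def by (rule someI_ex) (rule sig_bd[OF assms])
  thus "Fc e \<subseteq> C" "finite (Fc e)" "\<And>f. f \<in> Fc e \<Longrightarrow> dm f < dm e" "\<sigma> e ` sphere_set (dm e) = \<Union>(Fc e)"
    by auto
qed

lemma disc_split: "e \<in> C \<Longrightarrow> \<sigma> e ` disc_set (dm e) = e \<union> \<sigma> e ` sphere_set (dm e)"
proof -
  assume e: "e \<in> C"
  have "disc_set (dm e) = (disc_set (dm e) - sphere_set (dm e)) \<union> sphere_set (dm e)"
    using sphere_sub_disc by blast
  hence "\<sigma> e ` disc_set (dm e) = \<sigma> e ` (disc_set (dm e) - sphere_set (dm e)) \<union> \<sigma> e ` sphere_set (dm e)"
    by (metis image_Un)
  thus ?thesis using sig_open[OF e] by simp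
qed

lemma img_closed: assumes e: "e \<in> C"
  shows "closedin X (\<sigma> e ` disc_set (dm e))" "closedin X (\<sigma> e ` sphere_set (dm e))"
  using compactin_imp_closedin[OF haus image_compactin[OF compact_disc_top(1) sig_cont[OF e]]]
    compactin_imp_closedin[OF haus image_compactin[OF compact_disc_top(2) sig_cont[OF e]]]
  by auto

lemma bd_sub_cl: assumes e: "e \<in> C" shows "\<sigma> e ` sphere_set (dm e) \<subseteq> X closure_of e"
proof -
  have "\<sigma> e ` sphere_set (dm e) \<subseteq> \<sigma> e ` (disc_top (dm e) closure_of (disc_set (dm e) - sphere_set (dm e)))"
    using sphere_in_closure by (rule image_mono)
  also have "\<dots> \<subseteq> X closure_of (\<sigma> e ` (disc_set (dm e) - sphere_set (dm e)))"
    by (rule continuous_map_image_closure_subset[OF sig_cont[OF e]])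
  finally show ?thesis using sig_open[OF e] by simp
qed

lemma cl_eq: assumes e: "e \<in> C" shows "X closure_of e = e \<union> \<Union>(Fc e)"
proof
  show "X closure_of e \<subseteq> e \<union> \<Union>(Fc e)"
    using closure_of_minimal[OF _ img_closed(1)[OF e]] disc_split[OF e] Fc(4)[OF e] by auto
  show "e \<union> \<Union>(Fc e) \<subseteq> X closure_of e"
    using closure_of_subset[OF cell_top[OF e]] bd_sub_cl[OF e] Fc(4)[OF e] by auto
qed

lemma Fc_sub_cl: "e \<in> C \<Longrightarrow> f \<in> Fc e \<Longrightarrow> f \<subseteq> X closure_of e"
  using cl_eq by blast

lemma cl_self: "e \<in> C \<Longrightarrow> e \<subseteq> X closure_of e"
  using cl_eq by blast

lemma cl_trans: "f \<subseteq> X closure_of e \<Longrightarrow> X closure_of f \<subseteq> X closure_of e"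
  by (simp add: closure_of_minimal)

lemma meet_sub: assumes g: "g \<in> C" and c: "c \<in> C" and m: "g \<inter> X closure_of c \<noteq> {}"
  shows "g \<subseteq> X closure_of c"
proof -
  obtain p where p: "p \<in> g" "p \<in> c \<union> \<Union>(Fc c)" using m cl_eq[OF c] by auto
  show ?thesis
  proof (cases "p \<in> c")
    case True
    hence "g = c" using cell_disj[OF g c] p by blast
    thus ?thesis using cl_self[OF c] by simp
  next
    case False
    then obtain f where f: "f \<in> Fc c" "p \<in> f" using p by auto
    hence "g = f" using cell_disj[OF g] Fc(1)[OF c] p by blast
    thus ?thesis using Fc_sub_cl[OF c f(1)] by simp
  qed
qed

lemma lower: assumes g: "g \<in> C" and c: "c \<in> C" and s: "g \<subseteq> X closure_of c" and ne: "g \<noteq> c"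
  shows "g \<in> Fc c"
proof -
  obtain p where p: "p \<in> g" using cell_ne[OF g] by auto
  hence "p \<notin> c" using cell_disj[OF g c ne] by auto
  then obtain f where f: "f \<in> Fc c" "p \<in> f" using p s cl_eq[OF c] by auto
  hence "g = f" using cell_disj[OF g] Fc(1)[OF c] p by blast
  thus ?thesis using f by simp
qed

lemma dim0_cl: assumes c: "c \<in> C" "dm c = 0" shows "X closure_of c = c"
proof -
  have "Fc c = {}" using Fc(3)[OF c(1)] c(2) by auto
  thus ?thesis using cl_eq[OF c(1)] by simp
qed

lemma vertex_exists: "c \<in> C \<Longrightarrow> \<exists>v\<in>C. dm v = 0 \<and> v \<subseteq> X closure_of c"
proof (induction "dm c" arbitrary: c rule: less_induct)
  case less
  show ?case
  proof (cases "dm c = 0")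
    case True thus ?thesis using less.prems cl_self by blast
  next
    case False
    hence "\<sigma> c ` sphere_set (dm c) \<noteq> {}" using sphere_ne[of "dm c"] by auto
    then obtain f where f: "f \<in> Fc c" using Fc(4)[OF less.prems] by auto
    have fC: "f \<in> C" using f Fc(1)[OF less.prems] by auto
    obtain v where v: "v \<in> C" "dm v = 0" "v \<subseteq> X closure_of f"
      using less.hyps[OF Fc(3)[OF less.prems f] fC] by blast
    have "v \<subseteq> X closure_of c" using v(3) cl_trans[OF Fc_sub_cl[OF less.prems f]] by blast
    thus ?thesis using v by blast
  qed
qed


lemma vert_eq: assumes "u \<in> C" "v \<in> C" "dm v = 0" "u \<subseteq> X closure_of v" shows "u = v"
proof -
  have "u \<subseteq> v" using assms dim0_cl by simp
  thus ?thesis using cell_ne[OF assms(1)] cell_disj[OF assms(1,2)] by blast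
qed

lemma vert_conn:
  assumes sym: "\<And>v w. Q v w \<Longrightarrow> Q w v" and trans: "\<And>u v w. Q u v \<Longrightarrow> Q v w \<Longrightarrow> Q u w"
    and refl: "\<And>v. v \<in> C \<Longrightarrow> dm v = 0 \<Longrightarrow> v \<subseteq> X closure_of c0 \<Longrightarrow> Q v v"
  shows "c \<in> C \<Longrightarrow> X closure_of c \<subseteq> X closure_of c0 \<Longrightarrow>
    (\<forall>\<epsilon>\<in>C. dm \<epsilon> = 1 \<longrightarrow> \<epsilon> \<subseteq> X closure_of c \<longrightarrow>
       (\<forall>v\<in>C. \<forall>w\<in>C. dm v = 0 \<longrightarrow> dm w = 0 \<longrightarrow> v \<subseteq> X closure_of \<epsilon> \<longrightarrow> w \<subseteq> X closure_of \<epsilon> \<longrightarrow> Q v w)) \<Longrightarrow>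
    v \<in> C \<Longrightarrow> w \<in> C \<Longrightarrow> dm v = 0 \<Longrightarrow> dm w = 0 \<Longrightarrow> v \<subseteq> X closure_of c \<Longrightarrow> w \<subseteq> X closure_of c \<Longrightarrow> Q v w"
proof (induction "dm c" arbitrary: c v w rule: less_induct)
  case less
  note c = less.prems(1) and c0 = less.prems(2) and E = less.prems(3) and v = less.prems(4,6,8) and w = less.prems(5,7,9)
  consider "dm c = 0" | "dm c = 1" | "dm c \<ge> 2" by linarith
  then show ?case
  proof cases
    case 1
    have "v = c" "w = c" using vert_eq[OF v(1) c 1] vert_eq[OF w(1) c 1] v w by auto
    have "c \<subseteq> X closure_of c0" using cl_self[OF c] c0 by (rule order_trans)
    thus ?thesis using refl[OF c 1] \<open>v = c\<close> \<open>w = c\<close> by simp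
  next
    case 2
    thus ?thesis using E c cl_self[OF c] v w by blast
  next
    case 3
    define F where "F = Fc c"
    have FC: "F \<subseteq> C" and Ffin: "finite F" and Fdim: "\<And>f. f \<in> F \<Longrightarrow> dm f < dm c"
      and W: "\<sigma> c ` sphere_set (dm c) = \<Union>F"
      using Fc[OF c] by (auto simp: F_def)
    have "v \<noteq> c" "w \<noteq> c" using v(2) w(2) 3 by auto
    hence vF: "v \<in> F" and wF: "w \<in> F" using lower[OF v(1) c v(3)] lower[OF w(1) c w(3)] by (auto simp: F_def)
    have IH: "Q u1 u2" if f: "f \<in> F" and u1: "u1 \<in> C" "dm u1 = 0" "u1 \<subseteq> X closure_of f"
      and u2: "u2 \<in> C" "dm u2 = 0" "u2 \<subseteq> X closure_of f" for f u1 u2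
    proof -
      have fC: "f \<in> C" using f FC by auto
      have fcl: "X closure_of f \<subseteq> X closure_of c" using cl_trans[OF Fc_sub_cl[OF c]] f by (auto simp: F_def)
      have Ef: "\<forall>\<epsilon>\<in>C. dm \<epsilon> = 1 \<longrightarrow> \<epsilon> \<subseteq> X closure_of f \<longrightarrow>
       (\<forall>v\<in>C. \<forall>w\<in>C. dm v = 0 \<longrightarrow> dm w = 0 \<longrightarrow> v \<subseteq> X closure_of \<epsilon> \<longrightarrow> w \<subseteq> X closure_of \<epsilon> \<longrightarrow> Q v w)"
        using E fcl by blast
      have fc0: "X closure_of f \<subseteq> X closure_of c0" using fcl c0 by (rule order_trans)
      show ?thesis using less.hyps[OF Fdim[OF f] fC fc0 Ef u1(1) u2(1) u1(2) u2(2) u1(3) u2(3)] .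
    qed
    define A where "A = {f \<in> F. \<forall>u\<in>C. dm u = 0 \<longrightarrow> u \<subseteq> X closure_of f \<longrightarrow> Q v u}"
    define B where "B = F - A"
    have Bprop: "\<not> Q v u" if f: "f \<in> B" and u: "u \<in> C" "dm u = 0" "u \<subseteq> X closure_of f" for f u
    proof
      assume q: "Q v u"
      from f obtain u0 where u0: "u0 \<in> C" "dm u0 = 0" "u0 \<subseteq> X closure_of f" "\<not> Q v u0"
        by (auto simp: A_def B_def)
      have "Q u u0" using IH[of f u u0] f u u0 by (auto simp: B_def)
      thus False using trans[OF q] u0(4) by blast
    qed
    define E1 where "E1 = \<Union>((\<lambda>f. X closure_of f) ` A)"
    define E2 where "E2 = \<Union>((\<lambda>f. X closure_of f) ` B)"
    have cE1: "closedin X E1" unfolding E1_def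
      by (rule closedin_Union) (auto intro: finite_subset[OF _ Ffin] simp: A_def)
    have cE2: "closedin X E2" unfolding E2_def
      by (rule closedin_Union) (auto intro: finite_subset[OF _ Ffin] simp: B_def)
    have conn: "connectedin X (\<Union>F)"
      using connectedin_continuous_map_image[OF sig_cont[OF c] sphere_conn_disc[OF 3]] W by simp
    have cov: "\<Union>F \<subseteq> E1 \<union> E2"
    proof
      fix x assume "x \<in> \<Union>F"
      then obtain f where f: "f \<in> F" "x \<in> f" by auto
      hence "x \<in> X closure_of f" using closure_of_subset[OF cell_top] FC by blast
      thus "x \<in> E1 \<union> E2" using f(1) by (auto simp: E1_def E2_def B_def)
    qed
    have disj: "E1 \<inter> E2 \<inter> \<Union>F = {}"
    proof (rule ccontr)
      assume "E1 \<inter> E2 \<inter> \<Union>F \<noteq> {}"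
      then obtain x f1 f2 where f1: "f1 \<in> A" "x \<in> X closure_of f1" and f2: "f2 \<in> B" "x \<in> X closure_of f2"
        by (auto simp: E1_def E2_def)
      have f1C: "f1 \<in> C" and f2C: "f2 \<in> C" using f1 f2 FC by (auto simp: A_def B_def)
      have "x \<in> topspace X" using f1(2) by (simp add: in_closure_of)
      then obtain g where g: "g \<in> C" "x \<in> g" using cell_Un by blast
      have g1: "g \<subseteq> X closure_of f1" using meet_sub[OF g(1) f1C] g(2) f1(2) by blast
      have g2: "g \<subseteq> X closure_of f2" using meet_sub[OF g(1) f2C] g(2) f2(2) by blast
      obtain u where u: "u \<in> C" "dm u = 0" "u \<subseteq> X closure_of g" using vertex_exists[OF g(1)] by blast
      have u1: "u \<subseteq> X closure_of f1" using u(3) cl_trans[OF g1] by blast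
      have u2: "u \<subseteq> X closure_of f2" using u(3) cl_trans[OF g2] by blast
      have "Q v u" using f1(1) u u1 by (auto simp: A_def)
      moreover have "\<not> Q v u" using Bprop[OF f2(1) u(1,2) u2] .
      ultimately show False by blast
    qed
    have vA: "v \<in> A"
      using vF vert_eq[OF _ v(1) v(2)] refl[OF v(1) v(2) order_trans[OF v(3) c0]] by (auto simp: A_def)
    have ne1: "E1 \<inter> \<Union>F \<noteq> {}"
    proof -
      obtain p where "p \<in> v" using cell_ne[OF v(1)] by auto
      moreover have "v \<subseteq> X closure_of v" using cl_self[OF v(1)] .
      ultimately show ?thesis using vA vF by (auto simp: E1_def)
    qed
    have e2: "E2 \<inter> \<Union>F = {}"
      using conn cE1 cE2 cov disj ne1 unfolding connectedin_closedin by blast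
    have "w \<notin> B"
    proof
      assume "w \<in> B"
      obtain p where "p \<in> w" using cell_ne[OF w(1)] by auto
      moreover have "w \<subseteq> X closure_of w" using cl_self[OF w(1)] .
      ultimately have "p \<in> E2 \<inter> \<Union>F" using \<open>w \<in> B\<close> wF by (auto simp: E2_def)
      thus False using e2 by blast
    qed
    hence "w \<in> A" using wF by (auto simp: B_def)
    thus ?thesis using w(1,2) cl_self[OF w(1)] by (auto simp: A_def)
  qed
qed


lemma grp_sub:
  assumes cg: "cellular_groupoid \<Gamma> T X C I" and e: "e \<in> C" and f: "f \<in> C" and fe: "f \<subseteq> X closure_of e"
  shows "cell_grp I e \<subseteq> cell_grp I f"
proof -
  define p where "p = (SOME a. a \<in> f)"
  have pf: "p \<in> f" unfolding p_def using cell_ne[OF f] by (simp add: some_in_eq)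
  have pt: "p \<in> topspace X" using cell_top[OF f] pf by (rule subsetD)
  have lm: "locally_maximal X I" using cg unfolding cellular_groupoid_def by (elim conjE)
  have cel: "\<forall>e\<in>C. \<forall>a\<in>e. \<forall>b\<in>e. fiber I a = fiber I b" using cg unfolding cellular_groupoid_def by (elim conjE)
  obtain U where U: "openin X U" "p \<in> U" and Uf: "\<forall>u\<in>U. fiber I u \<subseteq> fiber I p"
    using lm_pt[OF lm pt] by (elim exE conjE)
  have pc: "p \<in> X closure_of e" using fe pf by (rule subsetD)
  have "\<forall>T. p \<in> T \<and> openin X T \<longrightarrow> (\<exists>y. y \<in> e \<and> y \<in> T)"
    using pc unfolding in_closure_of by (rule conjunct2)
  hence "\<exists>y. y \<in> e \<and> y \<in> U" using U by simp
  then obtain y where y: "y \<in> e" "y \<in> U" by (elim exE conjE)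
  have 1: "fiber I y \<subseteq> fiber I p" using Uf y(2) by (rule bspec)
  have q: "(SOME a. a \<in> e) \<in> e" using cell_ne[OF e] by (simp add: some_in_eq)
  have 2: "fiber I y = fiber I (SOME a. a \<in> e)" using cel e y(1) q by (meson bspec)
  show ?thesis using 1 2 by (simp add: cell_grp_def p_def)
qed
end


lemma (in gctx) CR_face: "CR S \<beta> \<Longrightarrow> e \<in> S \<Longrightarrow> f \<in> S \<Longrightarrow> is_face X f e \<Longrightarrow> x \<in> cell_grp I e \<Longrightarrow> \<beta> e x = \<beta> f x"
  unfolding cell_rep_def by (elim conjE) (drule bspec, assumption, drule bspec, assumption, drule mp, assumption, erule bspec, assumption)

lemma (in gctx) BR_face: "BRp S \<beta> \<Longrightarrow> e \<in> S \<Longrightarrow> f \<in> S \<Longrightarrow> is_face X f e \<Longrightarrow> conj_on G (cell_grp I e) (\<beta> f) (\<beta> e)"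
  unfolding bar_rep_def by (elim conjE) (drule bspec, assumption, drule bspec, assumption, erule mp, assumption)

locale mctx = cwc X C dm \<sigma> + gctx \<Gamma> T G TG X I
  for X :: "'a topology" and C dm \<sigma> and \<Gamma> :: "'g monoid" and T and G :: "'h monoid" and TG and I +
  assumes cg: "cellular_groupoid \<Gamma> T X C I"
begin

definition vt where "vt e = (SOME v. v \<in> C \<and> dm v = 0 \<and> v \<subseteq> X closure_of e)"

lemma vt: assumes "e \<in> C" shows "vt e \<in> C" "dm (vt e) = 0" "vt e \<subseteq> X closure_of e"
proof -
  have "\<exists>v. v \<in> C \<and> dm v = 0 \<and> v \<subseteq> X closure_of e" using vertex_exists[OF assms] by blast
  hence "vt e \<in> C \<and> dm (vt e) = 0 \<and> vt e \<subseteq> X closure_of e" unfolding vt_def by (rule someI_ex)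
  thus "vt e \<in> C" "dm (vt e) = 0" "vt e \<subseteq> X closure_of e" by simp_all
qed

lemma skel_iff: "e \<in> skel_cells C dm k \<longleftrightarrow> e \<in> C \<and> dm e \<le> k"
  by (simp add: skel_cells_def)

lemma gs: "e \<in> C \<Longrightarrow> f \<in> C \<Longrightarrow> f \<subseteq> X closure_of e \<Longrightarrow> cell_grp I e \<subseteq> cell_grp I f"
  by (rule grp_sub[OF cg])

lemma RR_lift:
  assumes S0: "skel_cells C dm 0 \<subseteq> S" and SC: "S \<subseteq> C" and c1: "CR C \<beta>1" and c2: "CR C \<beta>2"
    and h: "(\<beta>1, \<beta>2) \<in> RR S"
  shows "(\<beta>1, \<beta>2) \<in> RR C"
proof -
  obtain g where g: "g \<in> carrier G"
    and hh: "\<forall>e\<in>S. \<forall>x\<in>cell_grp I e. \<beta>2 e x = inv\<^bsub>G\<^esub> g \<otimes>\<^bsub>G\<^esub> \<beta>1 e x \<otimes>\<^bsub>G\<^esub> g"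
    using h unfolding RR_iff by (elim conjE bexE)
  have "\<forall>e\<in>C. \<forall>x\<in>cell_grp I e. \<beta>2 e x = inv\<^bsub>G\<^esub> g \<otimes>\<^bsub>G\<^esub> \<beta>1 e x \<otimes>\<^bsub>G\<^esub> g"
  proof (intro ballI)
    fix e x assume e: "e \<in> C" and x: "x \<in> cell_grp I e"
    define v where "v = vt e"
    have v: "v \<in> C" "dm v = 0" "v \<subseteq> X closure_of e" using vt[OF e] by (simp_all add: v_def)
    have vS: "v \<in> S" using S0 v by (auto simp: skel_iff)
    have xv: "x \<in> cell_grp I v" using gs[OF e v(1) v(3)] x by (rule subsetD)
    have f: "is_face X v e" using v(3) by (simp add: is_face_def)
    have "\<beta>2 e x = \<beta>2 v x" by (rule CR_face[OF c2 e v(1) f x])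
    also have "\<dots> = inv\<^bsub>G\<^esub> g \<otimes>\<^bsub>G\<^esub> \<beta>1 v x \<otimes>\<^bsub>G\<^esub> g" using hh vS xv by simp
    also have "\<beta>1 v x = \<beta>1 e x" by (rule CR_face[OF c1 e v(1) f x, symmetric])
    finally show "\<beta>2 e x = inv\<^bsub>G\<^esub> g \<otimes>\<^bsub>G\<^esub> \<beta>1 e x \<otimes>\<^bsub>G\<^esub> g" .
  qed
  hence "\<exists>g\<in>carrier G. \<forall>e\<in>C. \<forall>x\<in>cell_grp I e. \<beta>2 e x = inv\<^bsub>G\<^esub> g \<otimes>\<^bsub>G\<^esub> \<beta>1 e x \<otimes>\<^bsub>G\<^esub> g"
    using g by (rule bexI)
  thus ?thesis unfolding RR_iff using c1 c2 by simp
qed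

lemma BR_lift:
  assumes S0: "skel_cells C dm 0 \<subseteq> S" and SC: "S \<subseteq> C" and c1: "BRp C \<beta>1" and c2: "BRp C \<beta>2"
    and h: "(\<beta>1, \<beta>2) \<in> BR S"
  shows "(\<beta>1, \<beta>2) \<in> BR C"
proof -
  have hh: "\<forall>e\<in>S. conj_on G (cell_grp I e) (\<beta>1 e) (\<beta>2 e)" using h unfolding BR_iff by simp
  have "\<forall>e\<in>C. conj_on G (cell_grp I e) (\<beta>1 e) (\<beta>2 e)"
  proof
    fix e assume e: "e \<in> C"
    define v where "v = vt e"
    have v: "v \<in> C" "dm v = 0" "v \<subseteq> X closure_of e" using vt[OF e] by (simp_all add: v_def)
    have vS: "v \<in> S" using S0 v by (auto simp: skel_iff)
    have sub: "cell_grp I e \<subseteq> cell_grp I v" using gs[OF e v(1) v(3)] .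
    have f: "is_face X v e" using v(3) by (simp add: is_face_def)
    have car1: "\<forall>x\<in>cell_grp I e. \<beta>1 e x \<in> carrier G" using BR_car[OF c1 e] by blast
    have car1v: "\<forall>x\<in>cell_grp I e. \<beta>1 v x \<in> carrier G" using BR_car[OF c1 v(1)] sub by blast
    have car2v: "\<forall>x\<in>cell_grp I e. \<beta>2 v x \<in> carrier G" using BR_car[OF c2 v(1)] sub by blast
    have a: "conj_on G (cell_grp I e) (\<beta>1 v) (\<beta>1 e)" by (rule BR_face[OF c1 e v(1) f])
    have b: "conj_on G (cell_grp I e) (\<beta>1 v) (\<beta>2 v)" using conj_mono[OF sub] hh vS by blast
    have c: "conj_on G (cell_grp I e) (\<beta>2 v) (\<beta>2 e)" by (rule BR_face[OF c2 e v(1) f])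
    have "conj_on G (cell_grp I e) (\<beta>1 e) (\<beta>1 v)" by (rule conj_sym[OF G car1v a])
    hence "conj_on G (cell_grp I e) (\<beta>1 e) (\<beta>2 v)" by (rule conj_trans[OF G car1 _ b])
    thus "conj_on G (cell_grp I e) (\<beta>1 e) (\<beta>2 e)" by (rule conj_trans[OF G car1 _ c])
  qed
  thus ?thesis unfolding BR_iff using c1 c2 by simp
qed

lemma inj_rep:
  assumes S0: "skel_cells C dm 0 \<subseteq> S" and SC: "S \<subseteq> C"
  shows "inj_on (res_rep \<Gamma> T G TG X I S) (Rep_cell \<Gamma> T G TG X I C)"
proof (rule inj_onI)
  fix A B assume A: "A \<in> Rep_cell \<Gamma> T G TG X I C" and B: "B \<in> Rep_cell \<Gamma> T G TG X I C"
    and eq: "res_rep \<Gamma> T G TG X I S A = res_rep \<Gamma> T G TG X I S B"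
  obtain \<beta>1 where A1: "A = RR C `` {\<beta>1}" and c1: "CR C \<beta>1" using A unfolding Rep_cell_def by (auto elim: quotientE)
  obtain \<beta>2 where B1: "B = RR C `` {\<beta>2}" and c2: "CR C \<beta>2" using B unfolding Rep_cell_def by (auto elim: quotientE)
  have "RR S `` {\<beta>1} = RR S `` {\<beta>2}" using eq res_rep_class[OF SC c1] res_rep_class[OF SC c2] A1 B1 by simp
  moreover have "\<beta>2 \<in> RR S `` {\<beta>2}" using RR_refl[OF CR_mono[OF SC c2]] by simp
  ultimately have "\<beta>2 \<in> RR S `` {\<beta>1}" by simp
  hence "(\<beta>1, \<beta>2) \<in> RR S" by simp
  hence "(\<beta>1, \<beta>2) \<in> RR C" by (rule RR_lift[OF S0 SC c1 c2])
  thus "A = B" using equiv_class_eq[OF RR_equiv] A1 B1 by simp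
qed

lemma inj_bar:
  assumes S0: "skel_cells C dm 0 \<subseteq> S" and SC: "S \<subseteq> C"
  shows "inj_on (res_bar \<Gamma> T G TG X I S) (Rep_bar \<Gamma> T G TG X I C)"
proof (rule inj_onI)
  fix A B assume A: "A \<in> Rep_bar \<Gamma> T G TG X I C" and B: "B \<in> Rep_bar \<Gamma> T G TG X I C"
    and eq: "res_bar \<Gamma> T G TG X I S A = res_bar \<Gamma> T G TG X I S B"
  obtain \<beta>1 where A1: "A = BR C `` {\<beta>1}" and c1: "BRp C \<beta>1" using A unfolding Rep_bar_def by (auto elim: quotientE)
  obtain \<beta>2 where B1: "B = BR C `` {\<beta>2}" and c2: "BRp C \<beta>2" using B unfolding Rep_bar_def by (auto elim: quotientE)
  have "BR S `` {\<beta>1} = BR S `` {\<beta>2}" using eq res_bar_class[OF SC c1] res_bar_class[OF SC c2] A1 B1 by simp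
  moreover have "\<beta>2 \<in> BR S `` {\<beta>2}" using BR_refl[OF BRp_mono[OF SC c2]] by simp
  ultimately have "\<beta>2 \<in> BR S `` {\<beta>1}" by simp
  hence "(\<beta>1, \<beta>2) \<in> BR S" by simp
  hence "(\<beta>1, \<beta>2) \<in> BR C" by (rule BR_lift[OF S0 SC c1 c2])
  thus "A = B" using equiv_class_eq[OF BR_equiv] A1 B1 by simp
qed


definition ext :: "('a set \<Rightarrow> 'g \<Rightarrow> 'h) \<Rightarrow> 'a set \<Rightarrow> 'g \<Rightarrow> 'h"
  where "ext \<beta> = (\<lambda>e. if dm e \<le> 1 then \<beta> e else \<beta> (vt e))"

lemma S1mem: "e \<in> C \<Longrightarrow> dm e \<le> 1 \<Longrightarrow> e \<in> skel_cells C dm 1"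
  by (simp add: skel_iff)

lemma ext_hom:
  assumes h: "\<And>e. e \<in> skel_cells C dm 1 \<Longrightarrow> cont_hom \<Gamma> T (cell_grp I e) G TG (\<beta> e)" and e: "e \<in> C"
  shows "cont_hom \<Gamma> T (cell_grp I e) G TG (ext \<beta> e)"
proof (cases "dm e \<le> 1")
  case True thus ?thesis using h[OF S1mem[OF e True]] by (simp add: ext_def)
next
  case False
  have v: "vt e \<in> C" "dm (vt e) = 0" "vt e \<subseteq> X closure_of e" using vt[OF e] by simp_all
  have "cont_hom \<Gamma> T (cell_grp I (vt e)) G TG (\<beta> (vt e))" using h[OF S1mem[OF v(1)]] v(2) by simp
  hence "cont_hom \<Gamma> T (cell_grp I e) G TG (\<beta> (vt e))" by (rule cont_hom_mono[OF gs[OF e v(1) v(3)]])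
  thus ?thesis using False by (simp add: ext_def)
qed

lemma agree_rep:
  assumes c: "CR (skel_cells C dm 1) \<beta>" and e: "e \<in> C"
    and v: "v \<in> C" "dm v = 0" "v \<subseteq> X closure_of e" and w: "w \<in> C" "dm w = 0" "w \<subseteq> X closure_of e"
  shows "\<forall>x\<in>cell_grp I e. \<beta> v x = \<beta> w x"
proof (rule vert_conn[where Q="\<lambda>v w. \<forall>x\<in>cell_grp I e. \<beta> v x = \<beta> w x" and c0=e and c=e])
  show "\<forall>\<epsilon>\<in>C. dm \<epsilon> = 1 \<longrightarrow> \<epsilon> \<subseteq> X closure_of e \<longrightarrow>
       (\<forall>v\<in>C. \<forall>w\<in>C. dm v = 0 \<longrightarrow> dm w = 0 \<longrightarrow> v \<subseteq> X closure_of \<epsilon> \<longrightarrow> w \<subseteq> X closure_of \<epsilon> \<longrightarrow>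
          (\<forall>x\<in>cell_grp I e. \<beta> v x = \<beta> w x))"
  proof (intro ballI impI)
    fix \<epsilon> v w x assume \<epsilon>: "\<epsilon> \<in> C" "dm \<epsilon> = 1" "\<epsilon> \<subseteq> X closure_of e" and v: "v \<in> C" and w: "w \<in> C"
      and d: "dm v = 0" "dm w = 0" and vf: "v \<subseteq> X closure_of \<epsilon>" and wf: "w \<subseteq> X closure_of \<epsilon>"
      and x: "x \<in> cell_grp I e"
    have xe: "x \<in> cell_grp I \<epsilon>" using gs[OF e \<epsilon>(1) \<epsilon>(3)] x by (rule subsetD)
    have S: "\<epsilon> \<in> skel_cells C dm 1" "v \<in> skel_cells C dm 1" "w \<in> skel_cells C dm 1"
      using \<epsilon> v w d by (simp_all add: skel_iff)
    have "\<beta> \<epsilon> x = \<beta> v x" by (rule CR_face[OF c S(1) S(2) _ xe]) (simp add: is_face_def vf)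
    moreover have "\<beta> \<epsilon> x = \<beta> w x" by (rule CR_face[OF c S(1) S(3) _ xe]) (simp add: is_face_def wf)
    ultimately show "\<beta> v x = \<beta> w x" by simp
  qed
qed (use e v w in auto)

lemma P_rep:
  assumes c: "CR (skel_cells C dm 1) \<beta>" and e: "e \<in> C"
    and u: "u \<in> C" "dm u = 0" "u \<subseteq> X closure_of e" and x: "x \<in> cell_grp I e"
  shows "ext \<beta> e x = \<beta> u x"
proof -
  consider "dm e = 0" | "dm e = 1" | "dm e \<ge> 2" by linarith
  thus ?thesis
  proof cases
    case 1
    have "u = e" by (rule vert_eq[OF u(1) e 1 u(3)])
    thus ?thesis using 1 by (simp add: ext_def)
  next
    case 2
    have S: "e \<in> skel_cells C dm 1" "u \<in> skel_cells C dm 1" using e u 2 by (simp_all add: skel_iff)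
    have "\<beta> e x = \<beta> u x" by (rule CR_face[OF c S(1) S(2) _ x]) (simp add: is_face_def u(3))
    thus ?thesis using 2 by (simp add: ext_def)
  next
    case 3
    have "\<forall>x\<in>cell_grp I e. \<beta> (vt e) x = \<beta> u x"
      by (rule agree_rep[OF c e vt[OF e] u])
    thus ?thesis using 3 x by (simp add: ext_def)
  qed
qed

lemma ext_CR: assumes c: "CR (skel_cells C dm 1) \<beta>" shows "CR C (ext \<beta>)"
  unfolding cell_rep_def
proof (intro conjI ballI impI)
  fix e assume e: "e \<in> C"
  show "cont_hom \<Gamma> T (cell_grp I e) G TG (ext \<beta> e)"
    by (rule ext_hom[OF CR_hom[OF c] e])
next
  fix e f x assume e: "e \<in> C" and f: "f \<in> C" and fe: "is_face X f e" and x: "x \<in> cell_grp I e"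
  have fe': "f \<subseteq> X closure_of e" using fe by (simp add: is_face_def)
  obtain u where u: "u \<in> C" "dm u = 0" "u \<subseteq> X closure_of f" using vertex_exists[OF f] by blast
  have ue: "u \<subseteq> X closure_of e" using u(3) cl_trans[OF fe'] by (rule order_trans)
  have xf: "x \<in> cell_grp I f" using gs[OF e f fe'] x by (rule subsetD)
  have "ext \<beta> e x = \<beta> u x" by (rule P_rep[OF c e u(1,2) ue x])
  also have "\<dots> = ext \<beta> f x" by (rule P_rep[OF c f u xf, symmetric])
  finally show "ext \<beta> e x = ext \<beta> f x" .
qed

lemma ext_RR: assumes c: "CR (skel_cells C dm 1) \<beta>" shows "(ext \<beta>, \<beta>) \<in> RR (skel_cells C dm 1)"
proof -
  have c': "CR (skel_cells C dm 1) (ext \<beta>)" by (rule CR_mono[OF _ ext_CR[OF c]]) (auto simp: skel_cells_def)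
  have "ext \<beta> e = \<beta> e" if "e \<in> skel_cells C dm 1" for e using that by (simp add: ext_def skel_iff)
  have r: "(ext \<beta>, ext \<beta>) \<in> RR (skel_cells C dm 1)" by (rule RR_refl[OF c'])
  have eqf: "\<forall>e\<in>skel_cells C dm 1. \<forall>x\<in>cell_grp I e. \<beta> e x = ext \<beta> e x"
    by (simp add: ext_def skel_iff)
  obtain g where g: "g \<in> carrier G"
    and hh: "\<forall>e\<in>skel_cells C dm 1. \<forall>x\<in>cell_grp I e. ext \<beta> e x = inv\<^bsub>G\<^esub> g \<otimes>\<^bsub>G\<^esub> ext \<beta> e x \<otimes>\<^bsub>G\<^esub> g"
    using r unfolding RR_iff by (elim conjE bexE)
  have "\<forall>e\<in>skel_cells C dm 1. \<forall>x\<in>cell_grp I e. \<beta> e x = inv\<^bsub>G\<^esub> g \<otimes>\<^bsub>G\<^esub> ext \<beta> e x \<otimes>\<^bsub>G\<^esub> g"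
    using hh eqf by simp
  hence "\<exists>g\<in>carrier G. \<forall>e\<in>skel_cells C dm 1. \<forall>x\<in>cell_grp I e. \<beta> e x = inv\<^bsub>G\<^esub> g \<otimes>\<^bsub>G\<^esub> ext \<beta> e x \<otimes>\<^bsub>G\<^esub> g"
    using g by (rule bexI)
  thus ?thesis unfolding RR_iff using c c' by simp
qed


lemma conj_car: "(\<forall>x\<in>K. \<phi> x \<in> carrier G) \<Longrightarrow> conj_on G K \<phi> \<psi> \<Longrightarrow> \<forall>x\<in>K. \<psi> x \<in> carrier G"
  unfolding conj_on_def using grp_c4[OF G] by auto

lemma agree_bar:
  assumes c: "BRp (skel_cells C dm 1) \<beta>" and e: "e \<in> C"
    and v: "v \<in> C" "dm v = 0" "v \<subseteq> X closure_of e" and w: "w \<in> C" "dm w = 0" "w \<subseteq> X closure_of e"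
  shows "(\<forall>x\<in>cell_grp I e. \<beta> v x \<in> carrier G) \<and> conj_on G (cell_grp I e) (\<beta> v) (\<beta> w)"
proof -
  have carv: "\<forall>x\<in>cell_grp I e. \<beta> u x \<in> carrier G" if u: "u \<in> C" "dm u = 0" "u \<subseteq> X closure_of e" for u
  proof
    fix x assume "x \<in> cell_grp I e"
    hence "x \<in> cell_grp I u" using gs[OF e u(1) u(3)] by blast
    thus "\<beta> u x \<in> carrier G" using BR_car[OF c] u by (simp add: skel_iff)
  qed
  show ?thesis
  proof (rule vert_conn[where Q="\<lambda>v w. (\<forall>x\<in>cell_grp I e. \<beta> v x \<in> carrier G) \<and> conj_on G (cell_grp I e) (\<beta> v) (\<beta> w)" and c0=e and c=e])
    fix v w assume "(\<forall>x\<in>cell_grp I e. \<beta> v x \<in> carrier G) \<and> conj_on G (cell_grp I e) (\<beta> v) (\<beta> w)"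
    thus "(\<forall>x\<in>cell_grp I e. \<beta> w x \<in> carrier G) \<and> conj_on G (cell_grp I e) (\<beta> w) (\<beta> v)"
      using conj_car conj_sym[OF G] by blast
  next
    fix u v w assume "(\<forall>x\<in>cell_grp I e. \<beta> u x \<in> carrier G) \<and> conj_on G (cell_grp I e) (\<beta> u) (\<beta> v)"
      "(\<forall>x\<in>cell_grp I e. \<beta> v x \<in> carrier G) \<and> conj_on G (cell_grp I e) (\<beta> v) (\<beta> w)"
    thus "(\<forall>x\<in>cell_grp I e. \<beta> u x \<in> carrier G) \<and> conj_on G (cell_grp I e) (\<beta> u) (\<beta> w)"
      using conj_trans[OF G] by blast
  next
    fix v assume v: "v \<in> C" "dm v = 0" "v \<subseteq> X closure_of e"
    have "\<forall>x\<in>cell_grp I e. \<beta> v x \<in> carrier G" by (rule carv[OF v])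
    thus "(\<forall>x\<in>cell_grp I e. \<beta> v x \<in> carrier G) \<and> conj_on G (cell_grp I e) (\<beta> v) (\<beta> v)"
      using conj_refl[OF G] by blast
  next
    show "\<forall>\<epsilon>\<in>C. dm \<epsilon> = 1 \<longrightarrow> \<epsilon> \<subseteq> X closure_of e \<longrightarrow>
       (\<forall>v\<in>C. \<forall>w\<in>C. dm v = 0 \<longrightarrow> dm w = 0 \<longrightarrow> v \<subseteq> X closure_of \<epsilon> \<longrightarrow> w \<subseteq> X closure_of \<epsilon> \<longrightarrow>
          (\<forall>x\<in>cell_grp I e. \<beta> v x \<in> carrier G) \<and> conj_on G (cell_grp I e) (\<beta> v) (\<beta> w))"
    proof (intro ballI impI)
      fix \<epsilon> v w assume \<epsilon>: "\<epsilon> \<in> C" "dm \<epsilon> = 1" "\<epsilon> \<subseteq> X closure_of e" and v: "v \<in> C" and w: "w \<in> C"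
        and d: "dm v = 0" "dm w = 0" and vf: "v \<subseteq> X closure_of \<epsilon>" and wf: "w \<subseteq> X closure_of \<epsilon>"
      have sub: "cell_grp I e \<subseteq> cell_grp I \<epsilon>" by (rule gs[OF e \<epsilon>(1) \<epsilon>(3)])
      have ve: "v \<subseteq> X closure_of e" using vf cl_trans[OF \<epsilon>(3)] by (rule order_trans)
      have we: "w \<subseteq> X closure_of e" using wf cl_trans[OF \<epsilon>(3)] by (rule order_trans)
      have cv: "\<forall>x\<in>cell_grp I e. \<beta> v x \<in> carrier G" by (rule carv[OF v d(1) ve])
      have cw: "\<forall>x\<in>cell_grp I e. \<beta> w x \<in> carrier G" by (rule carv[OF w d(2) we])
      have S: "\<epsilon> \<in> skel_cells C dm 1" "v \<in> skel_cells C dm 1" "w \<in> skel_cells C dm 1"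
        using \<epsilon> v w d by (simp_all add: skel_iff)
      have a: "conj_on G (cell_grp I \<epsilon>) (\<beta> v) (\<beta> \<epsilon>)" by (rule BR_face[OF c S(1) S(2)]) (simp add: is_face_def vf)
      have b: "conj_on G (cell_grp I \<epsilon>) (\<beta> w) (\<beta> \<epsilon>)" by (rule BR_face[OF c S(1) S(3)]) (simp add: is_face_def wf)
      have a': "conj_on G (cell_grp I e) (\<beta> v) (\<beta> \<epsilon>)" by (rule conj_mono[OF sub a])
      have b': "conj_on G (cell_grp I e) (\<beta> \<epsilon>) (\<beta> w)" by (rule conj_sym[OF G cw conj_mono[OF sub b]])
      have "conj_on G (cell_grp I e) (\<beta> v) (\<beta> w)" by (rule conj_trans[OF G cv a' b'])
      thus "(\<forall>x\<in>cell_grp I e. \<beta> v x \<in> carrier G) \<and> conj_on G (cell_grp I e) (\<beta> v) (\<beta> w)"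
        using cv by simp
    qed
  qed (use e v w in auto)
qed

lemma P_bar:
  assumes c: "BRp (skel_cells C dm 1) \<beta>" and e: "e \<in> C"
    and u: "u \<in> C" "dm u = 0" "u \<subseteq> X closure_of e"
  shows "conj_on G (cell_grp I e) (\<beta> u) (ext \<beta> e)"
proof -
  consider "dm e = 0" | "dm e = 1" | "dm e \<ge> 2" by linarith
  thus ?thesis
  proof cases
    case 1
    have ue: "u = e" by (rule vert_eq[OF u(1) e 1 u(3)])
    have "e \<in> skel_cells C dm 1" using e 1 by (simp add: skel_iff)
    hence "\<forall>x\<in>cell_grp I e. \<beta> e x \<in> carrier G" using BR_car[OF c] by blast
    hence "conj_on G (cell_grp I e) (\<beta> e) (\<beta> e)" by (rule conj_refl[OF G])
    thus ?thesis using 1 ue by (simp add: ext_def)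
  next
    case 2
    have S: "e \<in> skel_cells C dm 1" "u \<in> skel_cells C dm 1" using e u 2 by (simp_all add: skel_iff)
    have "conj_on G (cell_grp I e) (\<beta> u) (\<beta> e)" by (rule BR_face[OF c S(1) S(2)]) (simp add: is_face_def u(3))
    thus ?thesis using 2 by (simp add: ext_def)
  next
    case 3
    have "conj_on G (cell_grp I e) (\<beta> u) (\<beta> (vt e))"
      using agree_bar[OF c e u vt[OF e]] by simp
    thus ?thesis using 3 by (simp add: ext_def)
  qed
qed

lemma ext_BRp: assumes c: "BRp (skel_cells C dm 1) \<beta>" shows "BRp C (ext \<beta>)"
  unfolding bar_rep_def
proof (intro conjI ballI impI)
  fix e assume e: "e \<in> C"
  show "cont_hom \<Gamma> T (cell_grp I e) G TG (ext \<beta> e)"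
    by (rule ext_hom[OF BR_hom[OF c] e])
next
  fix e f assume e: "e \<in> C" and f: "f \<in> C" and fe: "is_face X f e"
  have fe': "f \<subseteq> X closure_of e" using fe by (simp add: is_face_def)
  obtain u where u: "u \<in> C" "dm u = 0" "u \<subseteq> X closure_of f" using vertex_exists[OF f] by blast
  have ue: "u \<subseteq> X closure_of e" using u(3) cl_trans[OF fe'] by (rule order_trans)
  have sub: "cell_grp I e \<subseteq> cell_grp I f" by (rule gs[OF e f fe'])
  have sub2: "cell_grp I e \<subseteq> cell_grp I u" by (rule gs[OF e u(1) ue])
  have cu: "\<forall>x\<in>cell_grp I e. \<beta> u x \<in> carrier G"
    using BR_car[OF c] u sub2 by (auto simp: skel_iff)
  have cf: "\<forall>x\<in>cell_grp I e. ext \<beta> f x \<in> carrier G"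
    using cont_hom_car[OF ext_hom[OF BR_hom[OF c] f]] sub by blast
  have a: "conj_on G (cell_grp I e) (\<beta> u) (ext \<beta> f)" by (rule conj_mono[OF sub P_bar[OF c f u]])
  have a': "conj_on G (cell_grp I e) (ext \<beta> f) (\<beta> u)" by (rule conj_sym[OF G cu a])
  show "conj_on G (cell_grp I e) (ext \<beta> f) (ext \<beta> e)"
    by (rule conj_trans[OF G cf a' P_bar[OF c e u(1,2) ue]])
qed

lemma ext_BR: assumes c: "BRp (skel_cells C dm 1) \<beta>" shows "(ext \<beta>, \<beta>) \<in> BR (skel_cells C dm 1)"
proof -
  have c': "BRp (skel_cells C dm 1) (ext \<beta>)" by (rule BRp_mono[OF _ ext_BRp[OF c]]) (auto simp: skel_cells_def)
  have "\<forall>e\<in>skel_cells C dm 1. conj_on G (cell_grp I e) (ext \<beta> e) (\<beta> e)"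
  proof
    fix e assume e: "e \<in> skel_cells C dm 1"
    have "\<forall>x\<in>cell_grp I e. \<beta> e x \<in> carrier G" using BR_car[OF c e] by blast
    hence "conj_on G (cell_grp I e) (\<beta> e) (\<beta> e)" by (rule conj_refl[OF G])
    thus "conj_on G (cell_grp I e) (ext \<beta> e) (\<beta> e)" using e by (simp add: ext_def skel_iff)
  qed
  thus ?thesis unfolding BR_iff using c c' by simp
qed


lemma S1C: "skel_cells C dm 1 \<subseteq> C" by (auto simp: skel_cells_def)

lemma img_rep: "res_rep \<Gamma> T G TG X I (skel_cells C dm 1) ` Rep_cell \<Gamma> T G TG X I C
    = Rep_cell \<Gamma> T G TG X I (skel_cells C dm 1)"
proof
  show "res_rep \<Gamma> T G TG X I (skel_cells C dm 1) ` Rep_cell \<Gamma> T G TG X I C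
    \<subseteq> Rep_cell \<Gamma> T G TG X I (skel_cells C dm 1)"
  proof
    fix B assume "B \<in> res_rep \<Gamma> T G TG X I (skel_cells C dm 1) ` Rep_cell \<Gamma> T G TG X I C"
    then obtain A where A: "A \<in> Rep_cell \<Gamma> T G TG X I C" and B: "B = res_rep \<Gamma> T G TG X I (skel_cells C dm 1) A"
      by blast
    obtain \<beta> where A1: "A = RR C `` {\<beta>}" and c: "CR C \<beta>" using A unfolding Rep_cell_def by (auto elim: quotientE)
    have "B = RR (skel_cells C dm 1) `` {\<beta>}" using B A1 res_rep_class[OF S1C c] by simp
    moreover have "CR (skel_cells C dm 1) \<beta>" by (rule CR_mono[OF S1C c])
    ultimately show "B \<in> Rep_cell \<Gamma> T G TG X I (skel_cells C dm 1)"
      unfolding Rep_cell_def by (simp add: quotientI)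
  qed
  show "Rep_cell \<Gamma> T G TG X I (skel_cells C dm 1)
    \<subseteq> res_rep \<Gamma> T G TG X I (skel_cells C dm 1) ` Rep_cell \<Gamma> T G TG X I C"
  proof
    fix B assume "B \<in> Rep_cell \<Gamma> T G TG X I (skel_cells C dm 1)"
    then obtain \<beta> where B1: "B = RR (skel_cells C dm 1) `` {\<beta>}" and c: "CR (skel_cells C dm 1) \<beta>"
      unfolding Rep_cell_def by (auto elim: quotientE)
    have c': "CR C (ext \<beta>)" by (rule ext_CR[OF c])
    have "RR (skel_cells C dm 1) `` {ext \<beta>} = RR (skel_cells C dm 1) `` {\<beta>}"
      by (rule equiv_class_eq[OF RR_equiv ext_RR[OF c]])
    hence "B = res_rep \<Gamma> T G TG X I (skel_cells C dm 1) (RR C `` {ext \<beta>})"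
      using B1 res_rep_class[OF S1C c'] by simp
    moreover have "RR C `` {ext \<beta>} \<in> Rep_cell \<Gamma> T G TG X I C"
      unfolding Rep_cell_def using c' by (simp add: quotientI)
    ultimately show "B \<in> res_rep \<Gamma> T G TG X I (skel_cells C dm 1) ` Rep_cell \<Gamma> T G TG X I C"
      by blast
  qed
qed

lemma img_bar: "res_bar \<Gamma> T G TG X I (skel_cells C dm 1) ` Rep_bar \<Gamma> T G TG X I C
    = Rep_bar \<Gamma> T G TG X I (skel_cells C dm 1)"
proof
  show "res_bar \<Gamma> T G TG X I (skel_cells C dm 1) ` Rep_bar \<Gamma> T G TG X I C
    \<subseteq> Rep_bar \<Gamma> T G TG X I (skel_cells C dm 1)"
  proof
    fix B assume "B \<in> res_bar \<Gamma> T G TG X I (skel_cells C dm 1) ` Rep_bar \<Gamma> T G TG X I C"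
    then obtain A where A: "A \<in> Rep_bar \<Gamma> T G TG X I C" and B: "B = res_bar \<Gamma> T G TG X I (skel_cells C dm 1) A"
      by blast
    obtain \<beta> where A1: "A = BR C `` {\<beta>}" and c: "BRp C \<beta>" using A unfolding Rep_bar_def by (auto elim: quotientE)
    have "B = BR (skel_cells C dm 1) `` {\<beta>}" using B A1 res_bar_class[OF S1C c] by simp
    moreover have "BRp (skel_cells C dm 1) \<beta>" by (rule BRp_mono[OF S1C c])
    ultimately show "B \<in> Rep_bar \<Gamma> T G TG X I (skel_cells C dm 1)"
      unfolding Rep_bar_def by (simp add: quotientI)
  qed
  show "Rep_bar \<Gamma> T G TG X I (skel_cells C dm 1)
    \<subseteq> res_bar \<Gamma> T G TG X I (skel_cells C dm 1) ` Rep_bar \<Gamma> T G TG X I C"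
  proof
    fix B assume "B \<in> Rep_bar \<Gamma> T G TG X I (skel_cells C dm 1)"
    then obtain \<beta> where B1: "B = BR (skel_cells C dm 1) `` {\<beta>}" and c: "BRp (skel_cells C dm 1) \<beta>"
      unfolding Rep_bar_def by (auto elim: quotientE)
    have c': "BRp C (ext \<beta>)" by (rule ext_BRp[OF c])
    have "BR (skel_cells C dm 1) `` {ext \<beta>} = BR (skel_cells C dm 1) `` {\<beta>}"
      by (rule equiv_class_eq[OF BR_equiv ext_BR[OF c]])
    hence "B = res_bar \<Gamma> T G TG X I (skel_cells C dm 1) (BR C `` {ext \<beta>})"
      using B1 res_bar_class[OF S1C c'] by simp
    moreover have "BR C `` {ext \<beta>} \<in> Rep_bar \<Gamma> T G TG X I C"
      unfolding Rep_bar_def using c' by (simp add: quotientI)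
    ultimately show "B \<in> res_bar \<Gamma> T G TG X I (skel_cells C dm 1) ` Rep_bar \<Gamma> T G TG X I C"
      by blast
  qed
qed

end

theorem proposition5p2:
  fixes \<Gamma> :: "'g monoid" and T\<Gamma> :: "'g topology"
    and X :: "'a topology" and C :: "'a set set" and dm :: "'a set \<Rightarrow> nat"
    and \<sigma> :: "'a set \<Rightarrow> (nat \<Rightarrow> real) \<Rightarrow> 'a"
    and I :: "('g \<times> 'a) set"
    and G :: "'h monoid" and TG :: "'h topology"
  assumes "topological_group \<Gamma> T\<Gamma>"
    and "regular_CW X C dm \<sigma>"
    and "cellular_groupoid \<Gamma> T\<Gamma> X C I"
    and "topological_group G TG"
  shows
    "inj_on (res_rep \<Gamma> T\<Gamma> G TG X I (skel_cells C dm 0)) (Rep_cell \<Gamma> T\<Gamma> G TG X I C) \<and>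
     inj_on (res_bar \<Gamma> T\<Gamma> G TG X I (skel_cells C dm 0)) (Rep_bar \<Gamma> T\<Gamma> G TG X I C) \<and>
     bij_betw (res_rep \<Gamma> T\<Gamma> G TG X I (skel_cells C dm 1))
       (Rep_cell \<Gamma> T\<Gamma> G TG X I C) (Rep_cell \<Gamma> T\<Gamma> G TG X I (skel_cells C dm 1)) \<and>
     bij_betw (res_bar \<Gamma> T\<Gamma> G TG X I (skel_cells C dm 1))
       (Rep_bar \<Gamma> T\<Gamma> G TG X I C) (Rep_bar \<Gamma> T\<Gamma> G TG X I (skel_cells C dm 1))"
proof -
  have grp: "group G" using assms(4) by (simp add: topological_group_def)
  interpret m: mctx X C dm \<sigma> \<Gamma> T\<Gamma> G TG I
    by (simp add: mctx_def cwc_def gctx_def mctx_axioms_def assms(2,3) grp)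
  have s0: "skel_cells C dm 0 \<subseteq> skel_cells C dm 0" "skel_cells C dm 0 \<subseteq> C"
    "skel_cells C dm 0 \<subseteq> skel_cells C dm 1" "skel_cells C dm 1 \<subseteq> C"
    by (auto simp: skel_cells_def)
  show ?thesis
    unfolding bij_betw_def
    using m.inj_rep[OF s0(1,2)] m.inj_bar[OF s0(1,2)] m.inj_rep[OF s0(3,4)] m.inj_bar[OF s0(3,4)]
      m.img_rep m.img_bar by simp
qed

end
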